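(* For every positive integer $n$, $$\tilde{R}(\dot Q_2^{(brbb)},Q_n)=\tilde{R}(\dot Q_2^{(brrb)},Q_n)=\tilde{R}(\dot Q_2^{(rrbb)},Q_n)=2n,$$ and $$2n\le \tilde{R}(\dot Q_2^{(rbbb)},Q_n)\le 2n+O\!\left(\tfrac{n}{\log n}\right).$$
   Context: $Q_N$ is the Boolean lattice of all subsets of an $N$-element set ordered by inclusion. $Q_2$ has vertices $\varnothing,\{1\},\{2\},\{1,2\}$. The colored posets are: $\dot Q_2^{(brbb)}$: minimum $\varnothing$ blue, one middle vertex red, the other middle vertex blue, maximum blue; $\dot Q_2^{(brrb)}$: minimum blue, both middle vertices red, maximum blue; $\dot Q_2^{(rrbb)}$: minimum red, one middle vertex red, the other middle vertex blue, maximum blue; $\dot Q_2^{(rbbb)}$: minimum red, both middle vertices and the maximum blue. In a blue/red coloring of $Q_N$, a copy of a colored poset $\dot P$ is an induced subposet isomorphic to $P$ whose vertices have the colors of the corresponding vertices of $\dot P$. The poset Erdős–Hajnal number $\tilde{R}(\dot P,Q_n)$ is the minimum $N$ such that every blue/red coloring of $Q_N$ contains a copy of $\dot P$ or a monochromatic induced copy of $Q_n$. *)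

theory Defs
  imports Main "HOL-Library.Landau_Symbols"
begin

datatype color = Blue | Red

definition QN :: "nat \<Rightarrow> nat set set" where
  "QN N = Pow {0..<N}"

definition order_emb :: "nat \<Rightarrow> nat \<Rightarrow> (nat set \<Rightarrow> nat set) \<Rightarrow> bool" where
  "order_emb m N f \<longleftrightarrow> (\<forall>A\<in>QN m. f A \<in> QN N) \<and>
     (\<forall>A\<in>QN m. \<forall>B\<in>QN m. (A \<subseteq> B \<longleftrightarrow> f A \<subseteq> f B))"

text \<open>Colored versions of Q_2 (vertices {}, {0}, {1}, {0,1}).\<close>
definition Q2_brbb :: "nat set \<Rightarrow> color" where
  "Q2_brbb A = (if A = {0} then Red else Blue)"
definition Q2_brrb :: "nat set \<Rightarrow> color" where
  "Q2_brrb A = (if A = {0} \<or> A = {1} then Red else Blue)"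
definition Q2_rrbb :: "nat set \<Rightarrow> color" where
  "Q2_rrbb A = (if A = {} \<or> A = {0} then Red else Blue)"
definition Q2_rbbb :: "nat set \<Rightarrow> color" where
  "Q2_rbbb A = (if A = {} then Red else Blue)"

definition has_colored_copy :: "(nat set \<Rightarrow> color) \<Rightarrow> nat \<Rightarrow> (nat set \<Rightarrow> color) \<Rightarrow> bool" where
  "has_colored_copy pc N col \<longleftrightarrow>
     (\<exists>f. order_emb 2 N f \<and> (\<forall>A\<in>QN 2. col (f A) = pc A))"

definition has_mono_Qn :: "nat \<Rightarrow> nat \<Rightarrow> (nat set \<Rightarrow> color) \<Rightarrow> bool" where
  "has_mono_Qn n N col \<longleftrightarrow>
     (\<exists>f c. order_emb n N f \<and> (\<forall>A\<in>QN n. col (f A) = c))"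

definition EH_prop :: "(nat set \<Rightarrow> color) \<Rightarrow> nat \<Rightarrow> nat \<Rightarrow> bool" where
  "EH_prop pc n N \<longleftrightarrow> (\<forall>col. has_colored_copy pc N col \<or> has_mono_Qn n N col)"

definition EH_number :: "(nat set \<Rightarrow> color) \<Rightarrow> nat \<Rightarrow> nat" where
  "EH_number pc n = (LEAST N. EH_prop pc n N)"

end

theory Submission
  imports Defs
begin

lemma QN_iff: "A \<in> QN N \<longleftrightarrow> A \<subseteq> {0..<N}"
  by (simp add: QN_def)

lemma QN2_eq: "QN 2 = {{}, {0}, {1}, {0,1}}"
proof -
  have "{0..<2::nat} = {0,1}" by auto
  then show ?thesis unfolding QN_def by (simp add: Pow_insert insert_commute)
qed

lemma image_subset_iff_inj:
  assumes "inj_on h C" "A \<subseteq> C" "B \<subseteq> C"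
  shows "h ` A \<subseteq> h ` B \<longleftrightarrow> A \<subseteq> B"
  using assms unfolding inj_on_def by blast

lemma mono_from_emb:
  assumes "finite Z" "n \<le> card Z"
    and g_in: "\<And>A. A \<subseteq> Z \<Longrightarrow> g A \<subseteq> {0..<N}"
    and g_emb: "\<And>A B. A \<subseteq> Z \<Longrightarrow> B \<subseteq> Z \<Longrightarrow> (A \<subseteq> B \<longleftrightarrow> g A \<subseteq> g B)"
    and g_col: "\<And>A. A \<subseteq> Z \<Longrightarrow> col (g A) = c"
  shows "has_mono_Qn n N col"
proof -
  obtain Z0 where Z0: "Z0 \<subseteq> Z" "card Z0 = n" "finite Z0"
    using obtain_subset_with_card_n[OF assms(2)] by blast
  obtain h where h: "bij_betw h {0..<n} Z0"
    using ex_bij_betw_nat_finite[OF Z0(3)] Z0(2) by auto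
  have hinj: "inj_on h {0..<n}" and himg: "h ` {0..<n} = Z0"
    using h by (auto simp: bij_betw_def)
  define f where "f A = g (h ` A)" for A
  have sub: "A \<in> QN n \<Longrightarrow> h ` A \<subseteq> Z" for A
    using himg Z0(1) by (auto simp: QN_def)
  have "order_emb n N f"
    unfolding order_emb_def
  proof (intro conjI ballI)
    fix A assume "A \<in> QN n"
    then show "f A \<in> QN N" using g_in[OF sub] by (simp add: f_def QN_def)
  next
    fix A B assume A: "A \<in> QN n" and B: "B \<in> QN n"
    have "A \<subseteq> B \<longleftrightarrow> h ` A \<subseteq> h ` B"
      using image_subset_iff_inj[OF hinj] A B by (auto simp: QN_def)
    also have "\<dots> \<longleftrightarrow> f A \<subseteq> f B"
      unfolding f_def using g_emb[OF sub[OF A] sub[OF B]] .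
    finally show "A \<subseteq> B \<longleftrightarrow> f A \<subseteq> f B" .
  qed
  moreover have "\<forall>A\<in>QN n. col (f A) = c"
    using g_col sub by (simp add: f_def)
  ultimately show ?thesis unfolding has_mono_Qn_def by blast
qed

lemma copy4:
  assumes "a \<subset> b" "a \<subset> c" "b \<subseteq> d" "c \<subseteq> d" "\<not> b \<subseteq> c" "\<not> c \<subseteq> b"
    and "d \<subseteq> {0..<N}"
    and "col a = pc {}" "col b = pc {0}" "col c = pc {1}" "col d = pc {0,1}"
  shows "has_colored_copy pc N col"
proof -
  define f where "f A = (if A = {} then a else if A = {0} then b else if A = {1} then c else d)"
    for A :: "nat set"
  have fv: "f {} = a" "f {0} = b" "f {1} = c" "f {0,1} = d" "f {Suc 0} = c" "f {0, Suc 0} = d"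
    by (auto simp: f_def)
  have ne: "b \<noteq> a" "c \<noteq> a" "b \<noteq> d" "c \<noteq> d" "\<not> d \<subseteq> b" "\<not> d \<subseteq> c" "\<not> b \<subseteq> a" "\<not> c \<subseteq> a"
    using assms by blast+
  have "order_emb 2 N f"
    unfolding order_emb_def QN2_eq
    using assms ne by (simp add: fv QN_def) blast
  moreover have "\<forall>A\<in>QN 2. col (f A) = pc A"
    unfolding QN2_eq using assms fv by auto
  ultimately show ?thesis unfolding has_colored_copy_def by blast
qed


lemma emb_card_chain:
  assumes "order_emb n N f" "i \<le> n"
  shows "card (f {}) + i \<le> card (f {0..<i})"
  using assms(2)
proof (induction i)
  case 0 then show ?case by simp
next
  case (Suc i)
  have A: "{0..<i} \<in> QN n" "{0..<Suc i} \<in> QN n" using Suc.prems by (auto simp: QN_def)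
  have s1: "{0..<i} \<subseteq> {0..<Suc i}" and s2: "\<not> {0..<Suc i} \<subseteq> {0..<i}" by auto
  have sub: "f {0..<i} \<subseteq> f {0..<Suc i}"
    using assms(1) A s1 unfolding order_emb_def by blast
  have ne: "\<not> f {0..<Suc i} \<subseteq> f {0..<i}"
    using assms(1) A s2 unfolding order_emb_def by blast
  have "f {0..<Suc i} \<subseteq> {0..<N}"
    using assms(1) A unfolding order_emb_def QN_def by blast
  then have fin: "finite (f {0..<Suc i})" using finite_subset by blast
  have "card (f {0..<i}) < card (f {0..<Suc i})"
    using psubset_card_mono[OF fin] sub ne by blast
  then show ?case using Suc by simp
qed

lemma emb_in: "order_emb n N f \<Longrightarrow> A \<in> QN n \<Longrightarrow> f A \<subseteq> {0..<N}"
  unfolding order_emb_def QN_def by auto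

lemma lower_bound:
  assumes "N < 2*n" "A \<in> QN 2" "B \<in> QN 2" "A \<subseteq> B" "pc A = Red" "pc B = Blue"
  shows "\<not> EH_prop pc n N"
proof -
  define col where "col S = (if n \<le> card S then Red else Blue)" for S :: "nat set"
  have "\<not> has_colored_copy pc N col"
  proof
    assume "has_colored_copy pc N col"
    then obtain f where f: "order_emb 2 N f" "\<forall>X\<in>QN 2. col (f X) = pc X"
      unfolding has_colored_copy_def by blast
    have "f A \<subseteq> f B" using f(1) assms unfolding order_emb_def by auto
    moreover have "finite (f B)" using emb_in[OF f(1) assms(3)] finite_subset by blast
    ultimately have "card (f A) \<le> card (f B)" by (rule card_mono[rotated])
    moreover have "col (f A) = Red" "col (f B) = Blue" using f(2) assms by auto
    ultimately show False unfolding col_def by (auto split: if_splits)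
  qed
  moreover have "\<not> has_mono_Qn n N col"
  proof
    assume "has_mono_Qn n N col"
    then obtain f c where f: "order_emb n N f" "\<forall>X\<in>QN n. col (f X) = c"
      unfolding has_mono_Qn_def by blast
    have ch: "card (f {}) + n \<le> card (f {0..<n})" using emb_card_chain[OF f(1)] by simp
    have "card (f {0..<n}) \<le> N"
      using emb_in[OF f(1), of "{0..<n}"] card_mono[of "{0..<N}"] by (force simp: QN_def)
    moreover have c1: "col (f {}) = c" "col (f {0..<n}) = c" using f(2) by (auto simp: QN_def)
    ultimately show False using ch assms(1) unfolding col_def by (auto split: if_splits)
  qed
  ultimately show ?thesis unfolding EH_prop_def by blast
qed


definition stair :: "(nat set \<Rightarrow> color) \<Rightarrow> nat set \<Rightarrow> (nat \<Rightarrow> nat set) \<Rightarrow> nat set \<Rightarrow> nat \<Rightarrow> bool" where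
  "stair col R X A i \<longleftrightarrow> (\<exists>B. (\<forall>j\<le>i. B j \<subseteq> A \<and> col (R \<union> B j \<union> X j) = Blue) \<and>
                                 (\<forall>i' j. i' \<le> j \<longrightarrow> j \<le> i \<longrightarrow> B i' \<subseteq> B j))"

lemma stair_mono: "stair col R X A i \<Longrightarrow> A \<subseteq> A' \<Longrightarrow> stair col R X A' i"
  unfolding stair_def by blast

lemma stair_ext:
  assumes "col (R \<union> A \<union> X i) = Blue" and "i = 0 \<or> (\<exists>i0. i = Suc i0 \<and> stair col R X A i0)"
  shows "stair col R X A i"
  using assms(2)
proof
  assume "i = 0"
  then show ?thesis unfolding stair_def using assms(1)
    by (intro exI[of _ "\<lambda>_. A"]) auto
next
  assume "\<exists>i0. i = Suc i0 \<and> stair col R X A i0"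
  then obtain i0 B where i: "i = Suc i0" and B: "\<forall>j\<le>i0. B j \<subseteq> A \<and> col (R \<union> B j \<union> X j) = Blue"
    "\<forall>i' j. i' \<le> j \<longrightarrow> j \<le> i0 \<longrightarrow> B i' \<subseteq> B j"
    unfolding stair_def by blast
  define B' where "B' j = (if j \<le> i0 then B j else A)" for j
  have "\<forall>j\<le>i. B' j \<subseteq> A \<and> col (R \<union> B' j \<union> X j) = Blue"
    using B(1) assms(1) i by (auto simp: B'_def le_Suc_eq)
  moreover have "\<forall>i' j. i' \<le> j \<longrightarrow> j \<le> i \<longrightarrow> B' i' \<subseteq> B' j"
    using B i by (auto simp: B'_def le_Suc_eq)
  ultimately show ?thesis unfolding stair_def by blast
qed

lemma color_not_Blue: "c \<noteq> Blue \<Longrightarrow> c = Red"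
  by (cases c) auto

lemma staircase_lemma:
  fixes Y R :: "nat set" and X :: "nat \<Rightarrow> nat set"
  assumes Xmono: "\<And>i j. i \<le> j \<Longrightarrow> j \<le> k \<Longrightarrow> X i \<subseteq> X j"
    and disjX: "\<And>i. i \<le> k \<Longrightarrow> X i \<inter> Y = {}" and disjR: "R \<inter> Y = {}"
    and nost: "\<not> stair col R X Y k"
  shows "\<exists>g. (\<forall>A. A \<subseteq> Y \<longrightarrow> (\<exists>i\<le>k. g A = R \<union> A \<union> X i)) \<and>
             (\<forall>A B. A \<subseteq> Y \<longrightarrow> B \<subseteq> Y \<longrightarrow> (A \<subseteq> B \<longleftrightarrow> g A \<subseteq> g B)) \<and>
             (\<forall>A. A \<subseteq> Y \<longrightarrow> col (g A) = Red)"
proof -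
  define h where "h A = (LEAST i. \<not> stair col R X A i)" for A
  have nsA: "\<not> stair col R X A k" if "A \<subseteq> Y" for A
    using nost stair_mono that by blast
  have hk: "h A \<le> k" if "A \<subseteq> Y" for A
    unfolding h_def using nsA[OF that] by (rule Least_le)
  have hns: "\<not> stair col R X A (h A)" if "A \<subseteq> Y" for A
    unfolding h_def using nsA[OF that] by (rule LeastI)
  have hmono: "h A \<le> h A'" if "A \<subseteq> A'" "A' \<subseteq> Y" for A A'
  proof -
    have "\<not> stair col R X A (h A')" using hns[OF that(2)] stair_mono that(1) by blast
    then show ?thesis unfolding h_def by (rule Least_le)
  qed
  define g where "g A = R \<union> A \<union> X (h A)" for A
  have red: "col (g A) = Red" if A: "A \<subseteq> Y" for A
  proof (rule color_not_Blue, rule notI)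
    assume bl: "col (g A) = Blue"
    have "h A = 0 \<or> (\<exists>i0. h A = Suc i0 \<and> stair col R X A i0)"
    proof (cases "h A")
      case (Suc i0)
      then have "i0 < h A" by simp
      then have "stair col R X A i0" unfolding h_def by (rule not_less_Least[THEN notnotD])
      then show ?thesis using Suc by blast
    qed simp
    then have "stair col R X A (h A)" using stair_ext bl unfolding g_def by blast
    then show False using hns[OF A] by blast
  qed
  have cap: "(R \<union> A \<union> X i) \<inter> Y = A" if "A \<subseteq> Y" "i \<le> k" for A i
    using that disjX[of i] disjR by blast
  have emb: "A \<subseteq> B \<longleftrightarrow> g A \<subseteq> g B" if "A \<subseteq> Y" "B \<subseteq> Y" for A B
  proof
    assume "A \<subseteq> B"
    then have "X (h A) \<subseteq> X (h B)" using Xmono hmono hk that by blast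
    then show "g A \<subseteq> g B" using \<open>A \<subseteq> B\<close> unfolding g_def by blast
  next
    assume "g A \<subseteq> g B"
    then have "g A \<inter> Y \<subseteq> g B \<inter> Y" by blast
    then show "A \<subseteq> B" unfolding g_def using cap hk that by simp
  qed
  show ?thesis
    by (rule exI[of _ g]) (use hk red emb in \<open>auto simp: g_def\<close>)
qed


lemma brbb_copy:
  assumes "a \<subset> r" "a \<subset> c" "r \<subseteq> d" "c \<subseteq> d" "\<not> r \<subseteq> c" "\<not> c \<subseteq> r" "d \<subseteq> {0..<N}"
    and "col a = Blue" "col r = Red" "col c = Blue" "col d = Blue"
  shows "has_colored_copy Q2_brbb N col"
  by (rule copy4[OF assms(1-7)]) (use assms(8-11) in \<open>auto simp: Q2_brbb_def\<close>)

lemma IL_brbb: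
  assumes ae: "a \<subset> e" and ed: "e \<subset> d" and ar: "a \<subset> r" and rd: "r \<subset> d" and dN: "d \<subseteq> {0..<N}"
    and ca: "col a = Blue" and ce: "col e = Blue" and cd: "col d = Blue" and cr: "col r = Red"
  shows "has_colored_copy Q2_brbb N col"
proof (cases "\<exists>y\<in>d - r. col (insert y a) = Blue")
  case True
  then obtain y where y: "y \<in> d" "y \<notin> r" "col (insert y a) = Blue" by blast
  have "y \<notin> a" using y ar by blast
  show ?thesis
    by (rule brbb_copy[of a r "insert y a" d]) (use ar rd y \<open>y \<notin> a\<close> dN ca cd cr in auto)
next
  case False
  then have redat: "col (insert y a) = Red" if "y \<in> d - r" for y
    using that color_not_Blue by blast
  show ?thesis
  proof (cases "r \<subseteq> e \<or> e \<subseteq> r")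
    case False
    then show ?thesis
      by (intro brbb_copy[of a r e d]) (use ae ed ar rd dN ca ce cd cr in auto)
  next
    case True
    obtain y where y: "y \<in> d" "y \<notin> e" "y \<notin> r"
    proof (cases "e \<subseteq> r")
      case True
      obtain y where "y \<in> d" "y \<notin> r" using rd by blast
      then show ?thesis using that True by blast
    next
      case False
      then have "r \<subseteq> e" using \<open>r \<subseteq> e \<or> e \<subseteq> r\<close> by blast
      obtain y where "y \<in> d" "y \<notin> e" using ed by blast
      then show ?thesis using that \<open>r \<subseteq> e\<close> by blast
    qed
    have "y \<notin> a" using y ar by blast
    have "\<not> insert y a \<subseteq> e" using y by blast
    moreover have "\<not> e \<subseteq> insert y a" using y ae by blast
    ultimately show ?thesis
      by (intro brbb_copy[of a "insert y a" e d])
        (use ae ed y \<open>y \<notin> a\<close> dN ca ce cd redat[of y] in auto)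
  qed
qed


lemma brbb_upper:
  assumes "n \<ge> 1"
  shows "EH_prop Q2_brbb n (2*n)"
  unfolding EH_prop_def
proof (intro allI disjCI)
  fix col assume nomono: "\<not> has_mono_Qn n (2 * n) col"
  define Y where "Y = {0..<n}"
  define X where "X j = {n..<n+j}" for j
  have Xmono: "\<And>i j. i \<le> j \<Longrightarrow> j \<le> n \<Longrightarrow> X i \<subseteq> X j" by (auto simp: X_def)
  have disjX: "\<And>i. i \<le> n \<Longrightarrow> X i \<inter> Y = {}" by (auto simp: X_def Y_def)
  have st: "stair col {} X Y n"
  proof (rule ccontr)
    assume "\<not> stair col {} X Y n"
    from staircase_lemma[OF Xmono disjX _ this] obtain g where
      g1: "\<And>A. A \<subseteq> Y \<Longrightarrow> (\<exists>i\<le>n. g A = {} \<union> A \<union> X i)"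
      and g2: "\<And>A B. A \<subseteq> Y \<Longrightarrow> B \<subseteq> Y \<Longrightarrow> (A \<subseteq> B \<longleftrightarrow> g A \<subseteq> g B)"
      and g3: "\<And>A. A \<subseteq> Y \<Longrightarrow> col (g A) = Red"
      by blast
    have "has_mono_Qn n (2*n) col"
    proof (rule mono_from_emb[of Y n g])
      show "g A \<subseteq> {0..<2 * n}" if AY: "A \<subseteq> Y" for A
      proof -
        obtain i where i: "i \<le> n" "g A = {} \<union> A \<union> X i" using g1[OF AY] by blast
        have "X i \<subseteq> {0..<2*n}" using i(1) by (auto simp: X_def)
        moreover have "A \<subseteq> {0..<2*n}" using AY by (auto simp: Y_def)
        ultimately show ?thesis using i(2) by simp
      qed
      show "finite Y" by (simp add: Y_def)
      show "n \<le> card Y" by (simp add: Y_def)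
    qed (fact g2, fact g3)
    then show False using nomono by blast
  qed
  then obtain B where B: "\<forall>j\<le>n. B j \<subseteq> Y \<and> col ({} \<union> B j \<union> X j) = Blue"
    "\<forall>i' j. i' \<le> j \<longrightarrow> j \<le> n \<longrightarrow> B i' \<subseteq> B j"
    unfolding stair_def by blast
  have X0: "X 0 = {}" by (simp add: X_def)
  have BY: "B j \<subseteq> {0..<n}" if "j \<le> n" for j using B(1) that by (auto simp: Y_def)
  have B0Y: "B 0 \<subseteq> {0..<n}" using BY by simp
  have Bmono: "B i \<subseteq> B j" if "i \<le> j" "j \<le> n" for i j using B(2) that by blast
  have c0: "col (B 0) = Blue" using B(1) X0 by auto
  have cn: "col (B n \<union> X n) = Blue" using B(1) by auto
  have B0n: "B 0 \<subseteq> B n" using B(2) by auto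
  have BnY: "B n \<subseteq> Y" using B(1) by auto
  show "has_colored_copy Q2_brbb (2 * n) col"
  proof (cases "n = 1")
    case True
    define g where "g A = (if A = {} then B 0 else B n \<union> X n)" for A :: "nat set"
    have nX: "n \<in> X n" using True by (simp add: X_def)
    have "B 0 \<subseteq> {0..<n}" using B(1) by (auto simp: Y_def)
    then have nB0: "n \<notin> B 0" by auto
    have "has_mono_Qn n (2*n) col"
    proof (rule mono_from_emb[of "{n}" n g])
      show "(A \<subseteq> C) = (g A \<subseteq> g C)" if "A \<subseteq> {n}" "C \<subseteq> {n}" for A C
      proof -
        have "A = {} \<or> A = {n}" "C = {} \<or> C = {n}" using that by (auto simp: subset_singleton_iff)
        moreover have "B 0 \<subseteq> B n \<union> X n" using B0n by blast
        moreover have "\<not> B n \<union> X n \<subseteq> B 0" using nX nB0 by blast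
        ultimately show ?thesis by (auto simp: g_def)
      qed
      show "g A \<subseteq> {0..<2 * n}" for A
        using BnY B0n by (auto simp: g_def X_def Y_def)
      show "col (g A) = Blue" for A using c0 cn by (auto simp: g_def)
    qed (use True in auto)
    then show ?thesis using nomono by blast
  next
    case False
    with assms have n2: "n \<ge> 2" by simp
    have c1: "col (B 1 \<union> X 1) = Blue" using B(1) n2 by auto
    have dN: "B n \<union> X n \<subseteq> {0..<2*n}" using BnY by (auto simp: X_def Y_def)
    show ?thesis
    proof (rule ccontr)
      assume nocopy: "\<not> ?thesis"
      have allblue: "col r = Blue" if "B 0 \<subseteq> r" "r \<subseteq> B n \<union> X n" for r
      proof (rule ccontr)
        assume "col r \<noteq> Blue"
        then have rr: "col r = Red" by (rule color_not_Blue)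
        have "B 0 \<subset> B 1 \<union> X 1"
        proof -
          have "n \<in> X 1" "n \<notin> B 0" using B0Y by (auto simp: X_def)
          moreover have "B 0 \<subseteq> B 1" using Bmono[of 0 1] n2 by simp
          ultimately show ?thesis by blast
        qed
        moreover have "B 1 \<union> X 1 \<subset> B n \<union> X n"
        proof -
          have "Suc n \<in> X n" "Suc n \<notin> X 1" "Suc n \<notin> B 1" using n2 BY[of 1] by (auto simp: X_def)
          moreover have "B 1 \<subseteq> B n" "X 1 \<subseteq> X n" using Bmono[of 1 n] n2 by (auto simp: X_def)
          ultimately show ?thesis by blast
        qed
        moreover have "B 0 \<subset> r" using that rr c0 by auto
        moreover have "r \<subset> B n \<union> X n" using that rr cn by auto
        ultimately have "has_colored_copy Q2_brbb (2*n) col"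
          using IL_brbb[OF _ _ _ _ dN c0 c1 cn rr] by blast
        then show False using nocopy by blast
      qed
      have "has_mono_Qn n (2*n) col"
      proof (rule mono_from_emb[of "X n" n "\<lambda>A. B 0 \<union> A"])
        show "B 0 \<union> A \<subseteq> {0..<2 * n}" if "A \<subseteq> X n" for A
          using that B0Y by (auto simp: X_def)
        have "B 0 \<inter> X n = {}" using B0Y by (auto simp: X_def)
        then show "(A \<subseteq> C) = (B 0 \<union> A \<subseteq> B 0 \<union> C)" if "A \<subseteq> X n" "C \<subseteq> X n" for A C
          using that by blast
        show "col (B 0 \<union> A) = Blue" if "A \<subseteq> X n" for A
          using allblue[of "B 0 \<union> A"] that B0n by blast
      qed (auto simp: X_def)
      then show False using nomono by blast
    qed
  qed
qed


lemma brrb_copy: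
  assumes "a \<subseteq> r1" "a \<subseteq> r2" "r1 \<subseteq> d" "r2 \<subseteq> d" "\<not> r1 \<subseteq> r2" "\<not> r2 \<subseteq> r1" "d \<subseteq> {0..<N}"
    and "col a = Blue" "col r1 = Red" "col r2 = Red" "col d = Blue"
  shows "has_colored_copy Q2_brrb N col"
proof -
  have "r1 \<noteq> a" "r2 \<noteq> a" using assms(8-10) by auto
  then have "a \<subset> r1" "a \<subset> r2" using assms(1,2) by auto
  then show ?thesis
    by (rule copy4[of a r1 r2 d]) (use assms in \<open>auto simp: Q2_brrb_def\<close>)
qed

lemma brrb_gap:
  assumes ad: "a \<subseteq> d" and dN: "d \<subseteq> {0..<N}" and gap: "n + 1 \<le> card (d - a)"
    and ca: "col a = Blue" and cd: "col d = Blue"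
    and nocopy: "\<not> has_colored_copy Q2_brrb N col"
  shows "has_mono_Qn n N col"
proof -
  have fin: "finite d" using dN finite_subset by blast
  show ?thesis
  proof (cases "\<exists>r. a \<subseteq> r \<and> r \<subseteq> d \<and> col r = Red")
    case False
    show ?thesis
    proof (rule mono_from_emb[of "d - a" n "\<lambda>A. a \<union> A"])
      show "finite (d - a)" using fin by simp
      show "n \<le> card (d - a)" using gap by simp
      show "a \<union> A \<subseteq> {0..<N}" if "A \<subseteq> d - a" for A using that ad dN by blast
      show "(A \<subseteq> C) = (a \<union> A \<subseteq> a \<union> C)" if "A \<subseteq> d - a" "C \<subseteq> d - a" for A C
        using that by blast
      show "col (a \<union> A) = Blue" if "A \<subseteq> d - a" for A
        using False that ad color_not_Blue by blast
    qed
  next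
    case True
    define P where "P r \<longleftrightarrow> a \<subseteq> r \<and> r \<subseteq> d \<and> col r = Red" for r
    obtain r1 where "P r1" using True unfolding P_def by blast
    obtain r0 where r0: "P r0" "\<And>r. P r \<Longrightarrow> card r0 \<le> card r"
      using ex_has_least_nat[of P r1 card, OF \<open>P r1\<close>] by blast
    have r0d: "r0 \<subseteq> d" "a \<subseteq> r0" "col r0 = Red" using r0(1) by (auto simp: P_def)
    have "r0 \<noteq> a" using r0d ca by auto
    then obtain x where x: "x \<in> r0" "x \<notin> a" using r0d by blast
    show ?thesis
    proof (rule mono_from_emb[of "d - a - {x}" n "\<lambda>A. a \<union> A"])
      show "finite (d - a - {x})" using fin by simp
      have "x \<in> d - a" using x r0d by blast
      then have "card (d - a - {x}) = card (d - a) - 1" by (simp add: card_Diff_singleton_if)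
      then show "n \<le> card (d - a - {x})" using gap by simp
      show "a \<union> A \<subseteq> {0..<N}" if "A \<subseteq> d - a - {x}" for A using that ad dN by blast
      show "(A \<subseteq> C) = (a \<union> A \<subseteq> a \<union> C)" if "A \<subseteq> d - a - {x}" "C \<subseteq> d - a - {x}" for A C
        using that by blast
      show "col (a \<union> A) = Blue" if A: "A \<subseteq> d - a - {x}" for A
      proof (rule ccontr)
        assume "col (a \<union> A) \<noteq> Blue"
        then have cr: "col (a \<union> A) = Red" by (rule color_not_Blue)
        have xn: "x \<notin> a \<union> A" using A x by blast
        have "P (a \<union> A)" using cr A ad unfolding P_def by blast
        have c1: "\<not> r0 \<subseteq> a \<union> A" using x xn by blast
        show False
        proof (cases "a \<union> A \<subseteq> r0")
          case True
          have "finite r0" using r0d fin finite_subset by blast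
          then have "card (a \<union> A) < card r0"
            using True c1 psubset_card_mono by blast
          then show False using r0(2)[OF \<open>P (a \<union> A)\<close>] by simp
        next
          case False
          have "has_colored_copy Q2_brrb N col"
            by (rule brrb_copy[of a "a \<union> A" r0 d]) (use False c1 A ad r0d dN ca cd cr in auto)
          then show False using nocopy by blast
        qed
      qed
    qed
  qed
qed

lemma brrb_upper:
  assumes "n \<ge> 1"
  shows "EH_prop Q2_brrb n (2*n)"
  unfolding EH_prop_def
proof (intro allI disjCI)
  fix col assume nomono: "\<not> has_mono_Qn n (2 * n) col"
  show "has_colored_copy Q2_brrb (2 * n) col"
  proof (rule ccontr)
    assume nocopy: "\<not> has_colored_copy Q2_brrb (2 * n) col"
    define Y where "Y = {0..<n}"
    define X where "X = {n..<2*n}"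
    have XY: "X \<inter> Y = {}" by (auto simp: X_def Y_def)
    have cX: "card X = n" by (simp add: X_def)
    have finX: "finite X" by (simp add: X_def)
    have YXN: "Y \<union> X \<subseteq> {0..<2*n}" by (auto simp: X_def Y_def)
    have gapno: "False" if "a \<subseteq> d" "d \<subseteq> {0..<2*n}" "n + 1 \<le> card (d - a)" "col a = Blue" "col d = Blue" for a d
      using brrb_gap[OF that nocopy] nomono by blast
    define Bs where "Bs = {B. B \<subseteq> Y \<and> col B = Blue \<and> col (B \<union> X) = Blue}"
    have cardgap: "n + 1 \<le> card ((A \<union> X) - A')" if ps: "A' \<subset> A" and AY: "A \<subseteq> Y" for A A'
    proof -
      have eq: "(A \<union> X) - A' = (A - A') \<union> X" using ps AY XY by blast
      have fin: "finite (A - A')" using AY finite_subset by (auto simp: Y_def)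
      have "A - A' \<noteq> {}" using ps by blast
      then have c1: "1 \<le> card (A - A')" using fin by (simp add: Suc_le_eq card_gt_0_iff)
      have dj: "(A - A') \<inter> X = {}" using AY XY by blast
      have "card ((A - A') \<union> X) = card (A - A') + card X"
        by (rule card_Un_disjoint[OF fin finX dj])
      then show ?thesis using eq c1 cX by simp
    qed
    have below: "col A' = Red" if "B \<in> Bs" "A' \<subset> B" for B A'
    proof (rule color_not_Blue, rule notI)
      assume "col A' = Blue"
      moreover have "A' \<subseteq> B \<union> X" "B \<union> X \<subseteq> {0..<2*n}" using that YXN by (auto simp: Bs_def)
      moreover have "col (B \<union> X) = Blue" using that by (auto simp: Bs_def)
      moreover have "n + 1 \<le> card ((B \<union> X) - A')"
        by (rule cardgap) (use that in \<open>auto simp: Bs_def\<close>)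
      ultimately show False by (intro gapno[of A' "B \<union> X"])
    qed
    have fiber: "\<exists>S. S \<subseteq> X \<and> col (B \<union> S) = Red" if BB: "B \<in> Bs" for B
    proof (rule ccontr)
      assume nex: "\<not> (\<exists>S. S \<subseteq> X \<and> col (B \<union> S) = Red)"
      have allb: "col (B \<union> S) = Blue" if "S \<subseteq> X" for S
      proof (rule ccontr)
        assume "col (B \<union> S) \<noteq> Blue"
        then have "col (B \<union> S) = Red" by (rule color_not_Blue)
        then show False using nex that by blast
      qed
      have BY': "B \<subseteq> Y" using BB by (simp add: Bs_def)
      have dj: "B \<inter> X = {}" using BY' XY by blast
      have "has_mono_Qn n (2*n) col"
      proof (rule mono_from_emb[of X n "\<lambda>S. B \<union> S"])
        show "B \<union> S \<subseteq> {0..<2 * n}" if "S \<subseteq> X" for S using that BY' YXN by blast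
        show "(S \<subseteq> T) = (B \<union> S \<subseteq> B \<union> T)" if "S \<subseteq> X" "T \<subseteq> X" for S T using that dj by blast
        show "col (B \<union> S) = Blue" if "S \<subseteq> X" for S using allb that by blast
      qed (use finX cX in auto)
      then show False using nomono by blast
    qed
    define RB where "RB B = (SOME S. S \<subseteq> X \<and> col (B \<union> S) = Red)" for B
    have RB: "RB B \<subseteq> X" "col (B \<union> RB B) = Red" if "B \<in> Bs" for B
      using someI_ex[OF fiber[OF that]] unfolding RB_def by blast+
    define Dst where "Dst = {A. A \<subseteq> Y \<and> (\<forall>A'\<subseteq>A. col A' = Red)}"
    define phi where "phi A = (if A \<in> Dst then {} else if A \<in> Bs then RB A else X)" for A
    define g where "g A = A \<union> phi A" for A
    have phiX: "phi A \<subseteq> X" if "A \<subseteq> Y" for A unfolding phi_def using RB(1)[of A] by simp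
    have red: "col (g A) = Red" if AY: "A \<subseteq> Y" for A
    proof (cases "A \<in> Dst")
      case True
      then show ?thesis by (auto simp: g_def phi_def Dst_def)
    next
      case notD: False
      show ?thesis
      proof (cases "A \<in> Bs")
        case True
        then show ?thesis using RB notD by (simp add: g_def phi_def)
      next
        case notB: False
        have gA: "g A = A \<union> X" using notD notB by (simp add: g_def phi_def)
        show ?thesis
        proof (rule color_not_Blue, rule notI)
          assume bl: "col (g A) = Blue"
          obtain A' where A': "A' \<subseteq> A" "col A' = Blue"
            using notD AY color_not_Blue unfolding Dst_def by blast
          show False
          proof (cases "A' = A")
            case True
            then have "A \<in> Bs" using A' bl gA AY by (simp add: Bs_def)
            then show False using notB by blast
          next
            case False
            then have "A' \<subset> A" using A' by blast
            moreover have "A \<union> X \<subseteq> {0..<2*n}" using AY YXN by blast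
            moreover have "n + 1 \<le> card ((A \<union> X) - A')" using cardgap \<open>A' \<subset> A\<close> AY by blast
            moreover have "A' \<subseteq> A \<union> X" using A' by blast
            moreover have "col (A \<union> X) = Blue" using bl gA by simp
            ultimately show False using A'(2) by (intro gapno[of A' "A \<union> X"])
          qed
        qed
      qed
    qed
    have phimono: "phi A1 \<subseteq> phi A2" if "A1 \<subseteq> A2" "A2 \<subseteq> Y" for A1 A2
    proof (cases "A1 \<in> Dst")
      case True
      then show ?thesis by (simp add: phi_def)
    next
      case notD1: False
      have A1Y: "A1 \<subseteq> Y" using that by blast
      obtain A' where A': "A' \<subseteq> A1" "col A' \<noteq> Red" using notD1 A1Y unfolding Dst_def by blast
      have notD2: "A2 \<notin> Dst"
      proof
        assume "A2 \<in> Dst"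
        then have "col A' = Red" using A' that unfolding Dst_def by blast
        then show False using A' by blast
      qed
      show ?thesis
      proof (cases "A1 = A2")
        case True then show ?thesis by simp
      next
        case False
        then have ps: "A1 \<subset> A2" using that by blast
        have notB2: "A2 \<notin> Bs"
        proof
          assume B2: "A2 \<in> Bs"
          have "\<forall>A'\<subseteq>A1. col A' = Red"
          proof (intro allI impI)
            fix A'' assume "A'' \<subseteq> A1"
            then have "A'' \<subset> A2" using ps by blast
            then show "col A'' = Red" by (rule below[OF B2])
          qed
          then have "A1 \<in> Dst" using A1Y unfolding Dst_def by blast
          then show False using notD1 by blast
        qed
        then have "phi A2 = X" using notD2 by (simp add: phi_def)
        then show ?thesis using phiX that by blast
      qed
    qed
    have gY: "g A \<inter> Y = A" if "A \<subseteq> Y" for A using phiX[OF that] that XY by (auto simp: g_def)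
    have "has_mono_Qn n (2*n) col"
    proof (rule mono_from_emb[of Y n g])
      show "g A \<subseteq> {0..<2 * n}" if "A \<subseteq> Y" for A using phiX[OF that] that YXN by (auto simp: g_def)
      show "(A \<subseteq> C) = (g A \<subseteq> g C)" if "A \<subseteq> Y" "C \<subseteq> Y" for A C
      proof
        assume "A \<subseteq> C" then show "g A \<subseteq> g C" using phimono that by (auto simp: g_def)
      next
        assume "g A \<subseteq> g C" then have "g A \<inter> Y \<subseteq> g C \<inter> Y" by blast
        then show "A \<subseteq> C" using gY that by simp
      qed
    qed (use red in \<open>auto simp: Y_def\<close>)
    then show False using nomono by blast
  qed
qed


definition swapc :: "color \<Rightarrow> color" where
  "swapc c = (if c = Blue then Red else Blue)"

lemma swapc_simps: "swapc Blue = Red" "swapc Red = Blue" "swapc (swapc c) = c"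
  unfolding swapc_def by (cases c; simp)+

declare swapc_simps(1,2) [simp]

lemma emb_iff: "order_emb m N f \<Longrightarrow> A \<in> QN m \<Longrightarrow> B \<in> QN m \<Longrightarrow> (A \<subseteq> B \<longleftrightarrow> f A \<subseteq> f B)"
  unfolding order_emb_def by blast

lemma compl_subset_iff: "X \<subseteq> T \<Longrightarrow> Y \<subseteq> T \<Longrightarrow> (Y \<subseteq> X \<longleftrightarrow> T - X \<subseteq> T - Y)"
  by blast

lemma emb_compl:
  assumes "order_emb m N f"
  shows "order_emb m N (\<lambda>A. {0..<N} - f ({0..<m} - A))"
  unfolding order_emb_def
proof (intro conjI ballI)
  fix A assume "A \<in> QN m"
  show "{0..<N} - f ({0..<m} - A) \<in> QN N" by (simp add: QN_def)
next
  fix A B assume A: "A \<in> QN m" and B: "B \<in> QN m"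
  have cA: "{0..<m} - A \<in> QN m" and cB: "{0..<m} - B \<in> QN m" by (auto simp: QN_def)
  have fA: "f ({0..<m} - A) \<subseteq> {0..<N}" and fB: "f ({0..<m} - B) \<subseteq> {0..<N}"
    using emb_in[OF assms cA] emb_in[OF assms cB] by auto
  have "A \<subseteq> B \<longleftrightarrow> {0..<m} - B \<subseteq> {0..<m} - A"
    using A B compl_subset_iff[of B "{0..<m}" A] by (simp add: QN_def)
  also have "\<dots> \<longleftrightarrow> f ({0..<m} - B) \<subseteq> f ({0..<m} - A)"
    by (rule emb_iff[OF assms cB cA])
  also have "\<dots> \<longleftrightarrow> {0..<N} - f ({0..<m} - A) \<subseteq> {0..<N} - f ({0..<m} - B)"
    by (rule compl_subset_iff[OF fA fB])
  finally show "A \<subseteq> B \<longleftrightarrow> {0..<N} - f ({0..<m} - A) \<subseteq> {0..<N} - f ({0..<m} - B)" .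
qed

definition dualc :: "nat \<Rightarrow> (nat set \<Rightarrow> color) \<Rightarrow> nat set \<Rightarrow> color" where
  "dualc N col S = swapc (col ({0..<N} - S))"

lemma dual_mono:
  assumes "has_mono_Qn n N (dualc N col)"
  shows "has_mono_Qn n N col"
proof -
  obtain f c where f: "order_emb n N f" "\<forall>A\<in>QN n. dualc N col (f A) = c"
    using assms unfolding has_mono_Qn_def by blast
  let ?g = "\<lambda>A. {0..<N} - f ({0..<n} - A)"
  have "\<forall>A\<in>QN n. col (?g A) = swapc c"
  proof
    fix A assume "A \<in> QN n"
    then have "{0..<n} - A \<in> QN n" by (auto simp: QN_def)
    then have "swapc (col ({0..<N} - f ({0..<n} - A))) = c" using f(2) by (simp add: dualc_def)
    then have "swapc (swapc (col ({0..<N} - f ({0..<n} - A)))) = swapc c" by (rule arg_cong)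
    then show "col (?g A) = swapc c" by (simp only: swapc_simps)
  qed
  then show ?thesis using emb_compl[OF f(1)] unfolding has_mono_Qn_def by blast
qed

lemma rrbb_dual_pat: "A \<in> QN 2 \<Longrightarrow> swapc (Q2_rrbb ({0..<2} - A)) = Q2_rrbb A"
proof -
  assume "A \<in> QN 2"
  then have c: "A = {} \<or> A = {0} \<or> A = {1} \<or> A = {0,1}" by (simp add: QN2_eq)
  have e: "{0..<2::nat} = {0,1}" by auto
  have d1: "{0,1::nat} - {} = {0,1}" "{0,1::nat} - {0} = {1}" "{0,1::nat} - {1} = {0}" "{0,1::nat} - {0,1} = {}"
    by auto
  from c show ?thesis
  proof (elim disjE)
    assume "A = {}" then show ?thesis by (simp only: e d1) (simp add: Q2_rrbb_def)
  next
    assume "A = {0}" then show ?thesis by (simp only: e d1) (simp add: Q2_rrbb_def)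
  next
    assume "A = {1}" then show ?thesis by (simp only: e d1) (simp add: Q2_rrbb_def)
  next
    assume "A = {0,1}" then show ?thesis by (simp only: e d1) (simp add: Q2_rrbb_def)
  qed
qed

lemma dual_copy_rrbb:
  assumes "has_colored_copy Q2_rrbb N (dualc N col)"
  shows "has_colored_copy Q2_rrbb N col"
proof -
  obtain f where f: "order_emb 2 N f" "\<forall>A\<in>QN 2. dualc N col (f A) = Q2_rrbb A"
    using assms unfolding has_colored_copy_def by blast
  let ?g = "\<lambda>A. {0..<N} - f ({0..<2} - A)"
  have "\<forall>A\<in>QN 2. col (?g A) = Q2_rrbb A"
  proof
    fix A assume A: "A \<in> QN 2"
    then have "{0..<2} - A \<in> QN 2" by (auto simp: QN_def)
    then have "swapc (col ({0..<N} - f ({0..<2} - A))) = Q2_rrbb ({0..<2} - A)"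
      using f(2) by (simp add: dualc_def)
    then have "col (?g A) = swapc (Q2_rrbb ({0..<2} - A))" by (metis swapc_simps(3))
    then show "col (?g A) = Q2_rrbb A" using rrbb_dual_pat[OF A] by simp
  qed
  then show ?thesis using emb_compl[OF f(1)] unfolding has_colored_copy_def by blast
qed

lemma dualc_dualc: "S \<subseteq> {0..<N} \<Longrightarrow> dualc N (dualc N col) S = col S"
  by (simp add: dualc_def double_diff swapc_simps(3))

lemma rrbb_copy:
  assumes "a \<subseteq> b" "a \<subseteq> c" "b \<subseteq> d" "c \<subseteq> d" "\<not> b \<subseteq> c" "\<not> c \<subseteq> b" "d \<subseteq> {0..<N}"
    and "col a = Red" "col b = Red" "col c = Blue" "col d = Blue"
  shows "has_colored_copy Q2_rrbb N col"
proof -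
  have "b \<noteq> a" using assms(2,5) by blast
  moreover have "c \<noteq> a" using assms(8,10) by auto
  ultimately have "a \<subset> b" "a \<subset> c" using assms(1,2) by auto
  then show ?thesis
    by (rule copy4[of a b c d]) (use assms in \<open>auto simp: Q2_rrbb_def\<close>)
qed

lemma IL_rrbb:
  assumes eu: "e \<subseteq> u" and ud: "u \<subseteq> d" and ev: "e \<subseteq> v" and vd: "v \<subseteq> d"
    and une: "u \<noteq> e" and vnd: "v \<noteq> d" and dN: "d \<subseteq> {0..<N}"
    and ce: "col e = Red" and cu: "col u = Red" and cv: "col v = Blue" and cd: "col d = Blue"
  shows "has_colored_copy Q2_rrbb N col"
proof (cases "u \<subseteq> v \<or> v \<subseteq> u")
  case False
  then show ?thesis by (intro rrbb_copy[of e u v d]) (use assms in auto)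
next
  case True
  have "u \<noteq> v" using cu cv by auto
  obtain y where y: "y \<in> d" "y \<notin> u" "y \<notin> v"
  proof (cases "u \<subseteq> v")
    case True
    obtain y where "y \<in> d" "y \<notin> v" using vd vnd by blast
    then show ?thesis using that True by blast
  next
    case False
    then have "v \<subseteq> u" using \<open>u \<subseteq> v \<or> v \<subseteq> u\<close> by blast
    have "u \<noteq> d" using cu cd by auto
    obtain y where "y \<in> d" "y \<notin> u" using ud \<open>u \<noteq> d\<close> by blast
    then show ?thesis using that \<open>v \<subseteq> u\<close> by blast
  qed
  have yd: "insert y e \<subseteq> d" using y ev vd by blast
  have "v \<noteq> e" using cv ce by auto
  show ?thesis
  proof (cases "col (insert y e) = Blue")
    case True
    have "\<not> u \<subseteq> insert y e" using eu une y by blast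
    moreover have "\<not> insert y e \<subseteq> u" using y by blast
    ultimately show ?thesis
      by (intro rrbb_copy[of e u "insert y e" d]) (use assms yd True in auto)
  next
    case False
    then have cy: "col (insert y e) = Red" by (rule color_not_Blue)
    have "\<not> v \<subseteq> insert y e" using ev \<open>v \<noteq> e\<close> y by blast
    moreover have "\<not> insert y e \<subseteq> v" using y by blast
    ultimately show ?thesis
      by (intro rrbb_copy[of e "insert y e" v d]) (use assms yd cy in auto)
  qed
qed


lemma S1_rrbb:
  assumes nocopy: "\<not> has_colored_copy Q2_rrbb (2*n) col"
    and aa': "a \<subset> a'" and a'T: "a' \<subseteq> {0..<2*n}" and cd: "card a' + 1 + n \<le> 2*n"
    and ca: "col a = Red" and ca': "col a' = Red"
  shows "has_mono_Qn n (2*n) col"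
proof -
  let ?T = "{0..<2*n}"
  have "card a' < card ?T" using cd by simp
  then have "\<not> ?T \<subseteq> a'"
  proof (intro notI)
    assume "?T \<subseteq> a'"
    then have "?T = a'" using a'T by blast
    then show False using \<open>card a' < card ?T\<close> by simp
  qed
  then obtain w where w: "w \<in> ?T" "w \<notin> a'" by blast
  define R where "R = ?T - a' - {w}"
  have finR: "finite R" by (simp add: R_def)
  have "card R = card ?T - card a' - 1"
  proof -
    have "card (?T - a') = card ?T - card a'" using a'T by (simp add: card_Diff_subset finite_subset)
    moreover have "w \<in> ?T - a'" using w by blast
    ultimately show ?thesis unfolding R_def by (simp add: card_Diff_singleton_if)
  qed
  then have cR: "n \<le> card R" using cd by simp
  define P where "P A \<longleftrightarrow> (\<exists>B. A \<subseteq> B \<and> B \<subseteq> R \<and> col (a' \<union> B \<union> {w}) = Blue)" for A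
  define g where "g A = (if P A then a' \<union> A else a' \<union> A \<union> {w})" for A
  have gsub: "g A \<subseteq> a' \<union> A \<union> {w}" for A by (auto simp: g_def)
  have gsup: "a' \<union> A \<subseteq> g A" for A by (auto simp: g_def)
  have gR: "g A \<inter> R = A" if "A \<subseteq> R" for A
  proof -
    have "a' \<inter> R = {}" "w \<notin> R" by (auto simp: R_def)
    then show ?thesis using gsub[of A] gsup[of A] that by blast
  qed
  show ?thesis
  proof (rule mono_from_emb[of R n g])
    show "g A \<subseteq> ?T" if "A \<subseteq> R" for A using gsub[of A] that a'T w by (auto simp: R_def)
    show "(A \<subseteq> C) = (g A \<subseteq> g C)" if AR: "A \<subseteq> R" and CR: "C \<subseteq> R" for A C
    proof
      assume AC: "A \<subseteq> C"
      show "g A \<subseteq> g C"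
      proof (cases "P C")
        case True
        then have "P A" using AC unfolding P_def by blast
        then show ?thesis using True AC by (simp add: g_def) blast
      next
        case False
        then show ?thesis using gsub[of A] AC by (simp add: g_def) blast
      qed
    next
      assume "g A \<subseteq> g C"
      then have "g A \<inter> R \<subseteq> g C \<inter> R" by blast
      then show "A \<subseteq> C" using gR AR CR by simp
    qed
    show "col (g A) = Red" if AR: "A \<subseteq> R" for A
    proof (cases "P A")
      case True
      then obtain B where B: "A \<subseteq> B" "B \<subseteq> R" "col (a' \<union> B \<union> {w}) = Blue" unfolding P_def by blast
      have gA: "g A = a' \<union> A" using True by (simp add: g_def)
      show ?thesis
      proof (rule color_not_Blue, rule notI)
        assume bl: "col (g A) = Blue"
        have "has_colored_copy Q2_rrbb (2*n) col"
        proof (rule IL_rrbb[of a a' "a' \<union> B \<union> {w}" "a' \<union> A"])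
          show "a \<subseteq> a'" "a' \<subseteq> a' \<union> B \<union> {w}" "a \<subseteq> a' \<union> A" "a' \<union> A \<subseteq> a' \<union> B \<union> {w}"
            using aa' B by auto
          show "a' \<noteq> a" using aa' by blast
          have "w \<notin> a' \<union> A" using w AR by (auto simp: R_def)
          then show "a' \<union> A \<noteq> a' \<union> B \<union> {w}" by blast
          show "a' \<union> B \<union> {w} \<subseteq> ?T" using a'T B w by (auto simp: R_def)
          show "col a = Red" "col a' = Red" "col (a' \<union> B \<union> {w}) = Blue" "col (a' \<union> A) = Blue"
            using ca ca' B bl gA by auto
        qed
        then show False using nocopy by blast
      qed
    next
      case False
      then have "col (a' \<union> A \<union> {w}) \<noteq> Blue" using AR unfolding P_def by blast
      then show ?thesis using False by (simp add: g_def color_not_Blue)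
    qed
  qed (use finR cR in auto)
qed

lemma AC_blue:
  assumes finS: "finite S" and wS: "w \<in> S" and SN: "S \<subseteq> {0..<N}" and cS: "n + 1 \<le> card S"
    and H: "\<And>A r. A \<subseteq> S - {w} \<Longrightarrow> A \<union> {w} \<subseteq> r \<Longrightarrow> r \<subseteq> S \<Longrightarrow> col r = Red \<Longrightarrow> col A = Blue"
  shows "has_mono_Qn n N col"
proof -
  define P where "P A \<longleftrightarrow> (\<exists>r. A \<union> {w} \<subseteq> r \<and> r \<subseteq> S \<and> col r = Red)" for A
  define g where "g A = (if P A then A else A \<union> {w})" for A
  have gsub: "g A \<subseteq> A \<union> {w}" "A \<subseteq> g A" for A by (auto simp: g_def)
  have gW: "g A - {w} = A" if "A \<subseteq> S - {w}" for A using gsub[of A] that by blast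
  show ?thesis
  proof (rule mono_from_emb[of "S - {w}" n g])
    show "finite (S - {w})" using finS by simp
    show "n \<le> card (S - {w})" using cS wS finS by (simp add: card_Diff_singleton_if)
    show "g A \<subseteq> {0..<N}" if "A \<subseteq> S - {w}" for A using gsub[of A] that wS SN by blast
    show "(A \<subseteq> C) = (g A \<subseteq> g C)" if AS: "A \<subseteq> S - {w}" and CS: "C \<subseteq> S - {w}" for A C
    proof
      assume AC: "A \<subseteq> C"
      show "g A \<subseteq> g C"
      proof (cases "P C")
        case True
        then have "P A" using AC unfolding P_def by blast
        then show ?thesis using True AC by (simp add: g_def)
      next
        case False
        then show ?thesis using gsub[of A] AC by (simp add: g_def) blast
      qed
    next
      assume "g A \<subseteq> g C"
      then have "g A - {w} \<subseteq> g C - {w}" by blast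
      then show "A \<subseteq> C" using gW AS CS by simp
    qed
    show "col (g A) = Blue" if AS: "A \<subseteq> S - {w}" for A
    proof (cases "P A")
      case True
      then obtain r where "A \<union> {w} \<subseteq> r" "r \<subseteq> S" "col r = Red" unfolding P_def by blast
      then show ?thesis using H[OF AS] True by (simp add: g_def)
    next
      case False
      have "A \<union> {w} \<subseteq> S" using AS wS by blast
      then have "col (A \<union> {w}) \<noteq> Red" using False unfolding P_def by blast
      then show ?thesis using False by (cases "col (A \<union> {w})") (auto simp: g_def)
    qed
  qed
qed


lemma rrbb_small_red:
  assumes nocopy: "\<not> has_colored_copy Q2_rrbb (2*n) col"
    and nomono: "\<not> has_mono_Qn n (2*n) col"
    and aT: "a \<subseteq> {0..<2*n}" and ca: "col a = Red"
    and minim: "\<And>a''. a'' \<subset> a \<Longrightarrow> col a'' = Blue"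
    and small: "card a + 2 \<le> n"
  shows False
proof -
  let ?T = "{0..<2*n}"
  have finT: "finite ?T" by simp
  have fina: "finite a" using aT finite_subset by blast
  have st1: "col a' = Blue" if "a \<subset> a'" "a' \<subseteq> ?T" "card a' + 1 \<le> n" for a'
  proof (rule ccontr)
    assume "col a' \<noteq> Blue"
    then have "col a' = Red" by (rule color_not_Blue)
    then have "has_mono_Qn n (2*n) col"
      using S1_rrbb[OF nocopy that(1,2) _ ca] that(3) by simp
    then show False using nomono by blast
  qed
  have st2: "col S = Red" if aS: "a \<subset> S" and ST: "S \<subseteq> ?T" and cS: "n + 1 \<le> card S" for S
  proof (rule color_not_Blue, rule notI)
    assume bS: "col S = Blue"
    have finS: "finite S" using ST finite_subset by blast
    obtain w where w: "w \<in> S" "w \<notin> a" using aS by blast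
    have aw: "a \<subset> insert w a" using w by blast
    have caw: "card (insert w a) = card a + 1" using w fina by simp
    have bw: "col (insert w a) = Blue"
      by (rule st1) (use aw w ST caw small aT in auto)
    have awS: "insert w a \<noteq> S" using caw cS small by auto
    have between: "col u = Blue" if au: "a \<subset> u" and uS: "u \<subset> S" for u
    proof (rule ccontr)
      assume "col u \<noteq> Blue"
      then have cu: "col u = Red" by (rule color_not_Blue)
      have "has_colored_copy Q2_rrbb (2*n) col"
        by (rule IL_rrbb[of a u S "insert w a"]) (use au uS w awS ST ca cu bw bS in auto)
      then show False using nocopy by blast
    qed
    have H: "col A = Blue" if AS: "A \<subseteq> S - {w}" and Ar: "A \<union> {w} \<subseteq> r" and rS: "r \<subseteq> S" and cr: "col r = Red" for A r
    proof (rule ccontr)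
      assume "col A \<noteq> Blue"
      then have cA: "col A = Red" by (rule color_not_Blue)
      have rneS: "r \<noteq> S" using cr bS by auto
      have wA: "w \<notin> A" using AS by blast
      consider "A \<subset> a" | "A = a" | "a \<subset> A" | "\<not> A \<subseteq> a \<and> \<not> a \<subseteq> A" by blast
      then show False
      proof cases
        case 1 then show False using minim cA by auto
      next
        case 2
        have "a \<subset> r" using Ar w 2 by blast
        moreover have "r \<subset> S" using rS rneS by blast
        ultimately have "col r = Blue" by (rule between)
        then show False using cr by simp
      next
        case 3
        have "A \<subset> S" using AS w by blast
        then have "col A = Blue" using between 3 by blast
        then show False using cA by simp
      next
        case 4
        have v1: "a \<subset> A \<union> a" using 4 by blast
        have v2: "A \<union> a \<subset> S" using AS aS w by blast
        have cv: "col (A \<union> a) = Blue" using between v1 v2 by blast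
        have "has_colored_copy Q2_rrbb (2*n) col"
          by (rule IL_rrbb[of A r S "A \<union> a"]) (use Ar rS AS aS v2 wA ST cA cr cv bS in auto)
        then show False using nocopy by blast
      qed
    qed
    have "has_mono_Qn n (2*n) col"
      by (rule AC_blue[OF finS w(1) ST cS H])
    then show False using nomono by blast
  qed
  have "n \<le> card (?T - a)" using aT small by (simp add: card_Diff_subset fina)
  then obtain Y where Y: "Y \<subseteq> ?T - a" "card Y = n" "finite Y"
    using obtain_subset_with_card_n by metis
  define X where "X = ?T - a - Y"
  have aXY: "a \<union> X = ?T - Y" using Y aT by (auto simp: X_def)
  have YT: "Y \<subseteq> ?T" using Y by blast
  have "card (?T - Y) = card ?T - card Y" by (rule card_Diff_subset[OF Y(3) YT])
  then have caX: "card (a \<union> X) = n" using aXY Y by simp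
  define g where "g A = (if A = {} then a else a \<union> A \<union> X)" for A
  have gY: "g A \<inter> Y = A" if "A \<subseteq> Y" for A using that Y by (auto simp: g_def X_def)
  have "has_mono_Qn n (2*n) col"
  proof (rule mono_from_emb[of Y n g])
    show "g A \<subseteq> ?T" if "A \<subseteq> Y" for A using that Y aT by (auto simp: g_def X_def)
    show "(A \<subseteq> C) = (g A \<subseteq> g C)" if AY: "A \<subseteq> Y" and CY: "C \<subseteq> Y" for A C
    proof
      assume "A \<subseteq> C" then show "g A \<subseteq> g C" by (auto simp: g_def)
    next
      assume "g A \<subseteq> g C"
      then have "g A \<inter> Y \<subseteq> g C \<inter> Y" by blast
      then show "A \<subseteq> C" using gY AY CY by simp
    qed
    show "col (g A) = Red" if AY: "A \<subseteq> Y" for A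
    proof (cases "A = {}")
      case True then show ?thesis using ca by (simp add: g_def)
    next
      case False
      have gA: "g A = (a \<union> X) \<union> A" using False by (auto simp: g_def)
      have dj: "(a \<union> X) \<inter> A = {}" using aXY AY by blast
      have finA: "finite A" using AY Y(3) finite_subset by blast
      have finaX: "finite (a \<union> X)" using fina by (simp add: X_def)
      have "card (g A) = n + card A"
        using gA card_Un_disjoint[OF finaX finA dj] caX by simp
      moreover have "card A \<ge> 1" using False finA by (simp add: Suc_le_eq card_gt_0_iff)
      ultimately have cg: "n + 1 \<le> card (g A)" by simp
      have "a \<subset> g A" using gA False AY Y by blast
      moreover have "g A \<subseteq> ?T" using AY Y aT by (auto simp: gA X_def)
      ultimately show ?thesis using st2 cg by blast
    qed
  qed (use Y in auto)
  then show False using nomono by blast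
qed

lemma rrbb_red_large:
  assumes nocopy: "\<not> has_colored_copy Q2_rrbb (2*n) col"
    and nomono: "\<not> has_mono_Qn n (2*n) col"
    and rT: "r \<subseteq> {0..<2*n}" and cr: "col r = Red"
  shows "n < card r + 2"
proof (rule ccontr)
  assume "\<not> n < card r + 2"
  then have sm: "card r + 2 \<le> n" by simp
  define P where "P a \<longleftrightarrow> a \<subseteq> r \<and> col a = Red" for a
  obtain a where a: "P a" "\<And>b. P b \<Longrightarrow> card a \<le> card b"
    using ex_has_least_nat[of P r card] cr unfolding P_def by blast
  have finr: "finite r" using rT finite_subset by blast
  have ar: "a \<subseteq> r" "col a = Red" using a(1) by (auto simp: P_def)
  have minim: "col a'' = Blue" if "a'' \<subset> a" for a''
  proof (rule ccontr)
    assume "col a'' \<noteq> Blue"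
    then have "P a''" using that ar color_not_Blue unfolding P_def by blast
    then have "card a \<le> card a''" by (rule a(2))
    moreover have "card a'' < card a" using that ar finr finite_subset psubset_card_mono by metis
    ultimately show False by simp
  qed
  have "card a \<le> card r" using ar finr by (simp add: card_mono)
  then show False
    using rrbb_small_red[OF nocopy nomono _ ar(2) minim] ar rT sm by auto
qed


definition good_rrbb :: "nat \<Rightarrow> (nat set \<Rightarrow> color) \<Rightarrow> bool" where
  "good_rrbb n col \<longleftrightarrow> \<not> has_colored_copy Q2_rrbb (2*n) col \<and> \<not> has_mono_Qn n (2*n) col \<and>
     (\<forall>S. S \<subseteq> {0..<2*n} \<longrightarrow> card S + 2 \<le> n \<longrightarrow> col S = Blue) \<and>
     (\<forall>S. S \<subseteq> {0..<2*n} \<longrightarrow> n + 2 \<le> card S \<longrightarrow> col S = Red)"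

lemma card_compl: "S \<subseteq> {0..<N} \<Longrightarrow> card ({0..<N} - S) = N - card S"
  by (simp add: card_Diff_subset finite_subset)

lemma card_le_N: "S \<subseteq> {0..<N} \<Longrightarrow> card S \<le> N"
  using card_mono[of "{0..<N}" S] by simp

lemma good_dual:
  assumes "good_rrbb n col"
  shows "good_rrbb n (dualc (2*n) col)"
proof -
  let ?T = "{0..<2*n}"
  have g: "\<not> has_colored_copy Q2_rrbb (2*n) col" "\<not> has_mono_Qn n (2*n) col"
    "\<And>S. S \<subseteq> ?T \<Longrightarrow> card S + 2 \<le> n \<Longrightarrow> col S = Blue"
    "\<And>S. S \<subseteq> ?T \<Longrightarrow> n + 2 \<le> card S \<Longrightarrow> col S = Red"
    using assms unfolding good_rrbb_def by blast+
  have "\<not> has_colored_copy Q2_rrbb (2*n) (dualc (2*n) col)" using dual_copy_rrbb g(1) by blast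
  moreover have "\<not> has_mono_Qn n (2*n) (dualc (2*n) col)" using dual_mono g(2) by blast
  moreover have "dualc (2*n) col S = Blue" if "S \<subseteq> ?T" "card S + 2 \<le> n" for S
  proof -
    have "col (?T - S) = Red" using g(4)[of "?T - S"] card_compl[OF that(1)] that(2) by simp
    then show ?thesis by (simp add: dualc_def)
  qed
  moreover have "dualc (2*n) col S = Red" if "S \<subseteq> ?T" "n + 2 \<le> card S" for S
  proof -
    have "card S \<le> 2*n" using card_le_N[OF that(1)] .
    then have "col (?T - S) = Blue" using g(3)[of "?T - S"] card_compl[OF that(1)] that(2) by simp
    then show ?thesis by (simp add: dualc_def)
  qed
  ultimately show ?thesis unfolding good_rrbb_def by blast
qed

lemma R1a:
  assumes gd: "good_rrbb n col" and dT: "d \<subseteq> {0..<2*n}" and cd: "card d = n + 1"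
    and bd: "col d = Blue" and wd: "w \<in> d"
  shows "col (d - {w}) = Red"
proof (rule color_not_Blue, rule notI)
  assume bY: "col (d - {w}) = Blue"
  define Y where "Y = d - {w}"
  have nocopy: "\<not> has_colored_copy Q2_rrbb (2*n) col" and nomono: "\<not> has_mono_Qn n (2*n) col"
    and sb: "\<And>S. S \<subseteq> {0..<2*n} \<Longrightarrow> card S + 2 \<le> n \<Longrightarrow> col S = Blue"
    using gd unfolding good_rrbb_def by blast+
  have find: "finite d" using dT finite_subset by blast
  have finY: "finite Y" using find by (simp add: Y_def)
  have cY: "card Y = n" using cd wd find by (simp add: Y_def)
  define P where "P A \<longleftrightarrow> A \<noteq> Y \<and> col A = Blue" for A
  define g where "g A = (if P A then A else A \<union> {w})" for A
  have Pdown: "P A'" if "P A" "A' \<subseteq> A" "A \<subseteq> Y" for A A'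
  proof -
    have AY: "A \<subset> Y" using that(1,3) by (auto simp: P_def)
    have A'Y: "A' \<noteq> Y" using that(2) AY by blast
    have "col A' = Blue"
    proof (cases "card A' + 2 \<le> n")
      case True
      then show ?thesis using sb[of A'] that(2,3) dT by (auto simp: Y_def)
    next
      case False
      have "card A < card Y" using AY finY psubset_card_mono by blast
      moreover have "card A' \<le> card A" using that(2,3) finY finite_subset card_mono by metis
      ultimately have "card A' = card A" using False cY by simp
      then have "A' = A" using that(2,3) finY finite_subset card_subset_eq by metis
      then show ?thesis using that(1) by (simp add: P_def)
    qed
    then show ?thesis using A'Y by (simp add: P_def)
  qed
  have wY: "w \<notin> Y" by (simp add: Y_def)
  have gW: "g A - {w} = A" if "A \<subseteq> Y" for A using that wY by (auto simp: g_def)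
  have "has_mono_Qn n (2*n) col"
  proof (rule mono_from_emb[of Y n g])
    show "g A \<subseteq> {0..<2*n}" if "A \<subseteq> Y" for A using that wd dT by (auto simp: g_def Y_def)
    show "(A \<subseteq> C) = (g A \<subseteq> g C)" if AY: "A \<subseteq> Y" and CY: "C \<subseteq> Y" for A C
    proof
      assume AC: "A \<subseteq> C"
      show "g A \<subseteq> g C"
      proof (cases "P C")
        case True
        then have "P A" using Pdown AC CY by blast
        then show ?thesis using True AC by (simp add: g_def)
      next
        case False
        then show ?thesis using AC by (auto simp: g_def)
      qed
    next
      assume "g A \<subseteq> g C"
      then have "g A - {w} \<subseteq> g C - {w}" by blast
      then show "A \<subseteq> C" using gW AY CY by simp
    qed
    show "col (g A) = Blue" if AY: "A \<subseteq> Y" for A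
    proof (cases "P A")
      case True then show ?thesis by (simp add: g_def P_def)
    next
      case False
      show ?thesis
      proof (cases "A = Y")
        case True
        then have "g A = d" using False wd by (auto simp: g_def Y_def)
        then show ?thesis using bd by simp
      next
        case AnY: False
        then have cA: "col A = Red" using False color_not_Blue by (auto simp: P_def)
        have gA: "g A = A \<union> {w}" using False by (simp add: g_def)
        show ?thesis
        proof (rule ccontr)
          assume "col (g A) \<noteq> Blue"
          then have cAw: "col (A \<union> {w}) = Red" using gA color_not_Blue by simp
          have "has_colored_copy Q2_rrbb (2*n) col"
          proof (rule IL_rrbb[of A "A \<union> {w}" d Y])
            show "A \<subseteq> A \<union> {w}" "A \<union> {w} \<subseteq> d" "A \<subseteq> Y" "Y \<subseteq> d" using AY wd by (auto simp: Y_def)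
            show "A \<union> {w} \<noteq> A" using AY wY by blast
            show "Y \<noteq> d" using wd by (auto simp: Y_def)
          qed (use dT cA cAw bY bd in \<open>auto simp: Y_def\<close>)
          then show False using nocopy by blast
        qed
      qed
    qed
  qed (use finY cY in auto)
  then show False using nomono by blast
qed

lemma R1b:
  assumes gd: "good_rrbb n col" and eT: "e \<subseteq> {0..<2*n}" and ce: "card e + 1 = n"
    and re: "col e = Red" and wT: "w \<in> {0..<2*n}" and we: "w \<notin> e"
  shows "col (insert w e) = Blue"
proof -
  let ?T = "{0..<2*n}"
  have gd': "good_rrbb n (dualc (2*n) col)" by (rule good_dual[OF gd])
  have d'T: "?T - e \<subseteq> ?T" by blast
  have cd': "card (?T - e) = n + 1" using card_compl[OF eT] ce by simp
  have bd': "dualc (2*n) col (?T - e) = Blue" using re eT by (simp add: dualc_def double_diff)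
  have wd': "w \<in> ?T - e" using wT we by blast
  have "dualc (2*n) col (?T - e - {w}) = Red" by (rule R1a[OF gd' d'T cd' bd' wd'])
  moreover have "?T - (?T - e - {w}) = insert w e" using eT wT by blast
  ultimately show ?thesis unfolding dualc_def
    by (metis color.distinct(1) swapc_def)
qed

lemma no_blue_big:
  assumes gd: "good_rrbb n col" and dT: "d \<subseteq> {0..<2*n}" and cd: "card d = n + 1"
  shows "col d = Red"
proof (rule color_not_Blue, rule notI)
  assume bd: "col d = Blue"
  have nomono: "\<not> has_mono_Qn n (2*n) col"
    and sb: "\<And>S. S \<subseteq> {0..<2*n} \<Longrightarrow> card S + 2 \<le> n \<Longrightarrow> col S = Blue"
    using gd unfolding good_rrbb_def by blast+
  have find: "finite d" using dT finite_subset by blast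
  have sub_blue: "col e = Blue" if ed: "e \<subseteq> d" and ce: "card e + 1 = n" for e
  proof (rule ccontr)
    assume "col e \<noteq> Blue"
    then have re: "col e = Red" by (rule color_not_Blue)
    have "card (d - e) = 2" using card_Diff_subset[of e d] ed ce cd find finite_subset by fastforce
    then obtain w1 w2 where w: "d - e = {w1, w2}" "w1 \<noteq> w2" by (meson card_2_iff)
    have "col (d - {w2}) = Red" by (rule R1a[OF gd dT cd bd]) (use w in blast)
    moreover have "d - {w2} = insert w1 e" using w ed by blast
    moreover have "col (insert w1 e) = Blue"
      by (rule R1b[OF gd _ ce re]) (use w ed dT in blast)+
    ultimately show False by simp
  qed
  have "d \<noteq> {}" using cd by auto
  then obtain w where wd: "w \<in> d" by blast
  define Y where "Y = d - {w}"
  have finY: "finite Y" using find by (simp add: Y_def)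
  have cY: "card Y = n" using cd wd find by (simp add: Y_def)
  define g where "g A = (if A = Y then d else A)" for A
  have "has_mono_Qn n (2*n) col"
  proof (rule mono_from_emb[of Y n g])
    show "g A \<subseteq> {0..<2*n}" if "A \<subseteq> Y" for A using that dT by (auto simp: g_def Y_def)
    show "(A \<subseteq> C) = (g A \<subseteq> g C)" if AY: "A \<subseteq> Y" and CY: "C \<subseteq> Y" for A C
    proof -
      have "g A - {w} = A" "g C - {w} = C" using AY CY wd by (auto simp: g_def Y_def)
      moreover have "A \<subseteq> C \<Longrightarrow> g A \<subseteq> g C" using AY CY by (auto simp: g_def Y_def)
      ultimately show ?thesis by blast
    qed
    show "col (g A) = Blue" if AY: "A \<subseteq> Y" for A
    proof (cases "A = Y")
      case True then show ?thesis using bd by (simp add: g_def)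
    next
      case False
      then have "A \<subset> Y" using AY by blast
      then have "card A < n" using finY cY psubset_card_mono by metis
      show ?thesis
      proof (cases "card A + 2 \<le> n")
        case True then show ?thesis using sb[of A] AY dT False by (auto simp: g_def Y_def)
      next
        case c: False
        then have "card A + 1 = n" using \<open>card A < n\<close> by simp
        then show ?thesis using sub_blue[of A] AY False by (auto simp: g_def Y_def)
      qed
    qed
  qed (use finY cY in auto)
  then show False using nomono by blast
qed

lemma no_red_small:
  assumes gd: "good_rrbb n col" and eT: "e \<subseteq> {0..<2*n}" and ce: "card e + 1 = n"
  shows "col e = Blue"
proof -
  let ?T = "{0..<2*n}"
  have "dualc (2*n) col (?T - e) = Red"
    by (rule no_blue_big[OF good_dual[OF gd]]) (use card_compl[OF eT] ce in auto)
  then have "swapc (col e) = Red" using eT by (simp add: dualc_def double_diff)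
  then show ?thesis by (metis color.distinct(1) swapc_def)
qed

lemma good_false:
  assumes gd: "good_rrbb n col" and n1: "n \<ge> 1"
  shows False
proof -
  let ?T = "{0..<2*n}"
  have nomono: "\<not> has_mono_Qn n (2*n) col"
    and sb: "\<And>S. S \<subseteq> ?T \<Longrightarrow> card S + 2 \<le> n \<Longrightarrow> col S = Blue"
    and lr: "\<And>S. S \<subseteq> ?T \<Longrightarrow> n + 2 \<le> card S \<Longrightarrow> col S = Red"
    using gd unfolding good_rrbb_def by blast+
  define c where "c = {0..<n}"
  have cT: "c \<subseteq> ?T" by (auto simp: c_def)
  show False
  proof (cases "col c")
    case Blue
    have "has_mono_Qn n (2*n) col"
    proof (rule mono_from_emb[of c n "\<lambda>A. A"])
      show "col A = Blue" if Ac: "A \<subseteq> c" for A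
      proof (cases "A = c")
        case True then show ?thesis using Blue by simp
      next
        case False
        then have "card A < n" using Ac psubset_card_mono[of c A] by (auto simp: c_def)
        then show ?thesis
          using sb[of A] no_red_small[OF gd, of A] Ac cT by (cases "card A + 2 \<le> n") auto
      qed
    qed (use cT in \<open>auto simp: c_def\<close>)
    then show False using nomono by blast
  next
    case Red
    define Z where "Z = ?T - c"
    have cZ: "card Z = n" by (simp add: Z_def c_def)
    have "has_mono_Qn n (2*n) col"
    proof (rule mono_from_emb[of Z n "\<lambda>A. c \<union> A"])
      show "(A \<subseteq> C) = (c \<union> A \<subseteq> c \<union> C)" if "A \<subseteq> Z" "C \<subseteq> Z" for A C
        using that by (auto simp: Z_def)
      show "c \<union> A \<subseteq> ?T" if "A \<subseteq> Z" for A using that cT by (auto simp: Z_def)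
      show "col (c \<union> A) = Red" if AZ: "A \<subseteq> Z" for A
      proof (cases "A = {}")
        case True then show ?thesis using Red by simp
      next
        case False
        have finA: "finite A" using AZ by (auto simp: Z_def intro: finite_subset)
        have "c \<inter> A = {}" using AZ by (auto simp: Z_def)
        then have cc: "card (c \<union> A) = n + card A" using finA by (simp add: card_Un_disjoint c_def)
        have "card A \<ge> 1" using False finA by (simp add: Suc_le_eq card_gt_0_iff)
        moreover have cAT: "c \<union> A \<subseteq> ?T" using AZ cT by (auto simp: Z_def)
        ultimately show ?thesis
          using lr[OF cAT] no_blue_big[OF gd cAT] cc color_not_Blue
          by (cases "card A = 1") auto
      qed
    qed (use cZ in \<open>auto simp: Z_def\<close>)
    then show False using nomono by blast
  qed
qed

lemma rrbb_upper:
  assumes "n \<ge> 1"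
  shows "EH_prop Q2_rrbb n (2*n)"
  unfolding EH_prop_def
proof (intro allI disjCI)
  fix col assume nomono: "\<not> has_mono_Qn n (2 * n) col"
  show "has_colored_copy Q2_rrbb (2 * n) col"
  proof (rule ccontr)
    assume nocopy: "\<not> ?thesis"
    let ?T = "{0..<2*n}"
    have sb: "col S = Blue" if "S \<subseteq> ?T" "card S + 2 \<le> n" for S
      using rrbb_red_large[OF nocopy nomono that(1)] that(2) color_not_Blue by force
    have nocopy': "\<not> has_colored_copy Q2_rrbb (2*n) (dualc (2*n) col)" using dual_copy_rrbb nocopy by blast
    have nomono': "\<not> has_mono_Qn n (2*n) (dualc (2*n) col)" using dual_mono nomono by blast
    have lr: "col S = Red" if ST: "S \<subseteq> ?T" and cS: "n + 2 \<le> card S" for S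
    proof (rule color_not_Blue, rule notI)
      assume "col S = Blue"
      then have "dualc (2*n) col (?T - S) = Red" using ST by (simp add: dualc_def double_diff)
      then have "n < card (?T - S) + 2" using rrbb_red_large[OF nocopy' nomono'] by blast
      then show False using card_compl[OF ST] cS card_le_N[OF ST] by simp
    qed
    have "good_rrbb n col" unfolding good_rrbb_def using nocopy nomono sb lr by blast
    then show False using good_false assms by blast
  qed
qed


lemma card_perms:
  assumes "finite X"
  shows "card {xs. distinct xs \<and> set xs = X} = fact (card X)"
proof -
  have "{xs. distinct xs \<and> set xs = X} = {xs. length xs = card X \<and> distinct xs \<and> set xs \<subseteq> X}"
  proof (intro set_eqI iffI)
    fix xs assume "xs \<in> {xs. distinct xs \<and> set xs = X}"
    then show "xs \<in> {xs. length xs = card X \<and> distinct xs \<and> set xs \<subseteq> X}"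
      using distinct_card by fastforce
  next
    fix xs assume xs: "xs \<in> {xs. length xs = card X \<and> distinct xs \<and> set xs \<subseteq> X}"
    then have "card (set xs) = card X" using distinct_card by fastforce
    then have "set xs = X" using xs assms card_subset_eq by blast
    then show "xs \<in> {xs. distinct xs \<and> set xs = X}" using xs by simp
  qed
  also have "card \<dots> = \<Prod>{card X - card X + 1 .. card X}"
    by (rule card_lists_distinct_length_eq[OF assms]) simp
  also have "\<dots> = fact (card X)" by (simp add: fact_prod)
  finally show ?thesis .
qed

lemma nth_notin_take:
  assumes "distinct xs" "i < length xs"
  shows "xs ! i \<notin> set (take i xs)"
proof
  assume "xs ! i \<in> set (take i xs)"
  then obtain j where j: "j < length (take i xs)" "take i xs ! j = xs ! i" by (auto simp: in_set_conv_nth)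
  then have "j < i" "xs ! j = xs ! i" by auto
  then have "j = i" using assms nth_eq_iff_index_eq by (metis order.strict_trans)
  then show False using \<open>j < i\<close> by simp
qed

lemma first_diff:
  assumes "xs \<noteq> ys" "length xs = length ys"
  shows "\<exists>i<length xs. take i xs = take i ys \<and> xs ! i \<noteq> ys ! i"
proof -
  have "\<exists>i<length xs. xs ! i \<noteq> ys ! i" using assms nth_equalityI by blast
  then obtain i where i: "i < length xs" "xs ! i \<noteq> ys ! i" "\<And>j. j < i \<Longrightarrow> xs ! j = ys ! j"
    using exists_least_iff[of "\<lambda>i. i < length xs \<and> xs ! i \<noteq> ys ! i"]
    by (metis (no_types, lifting) order.strict_trans)
  have "take i xs = take i ys"
    by (rule nth_equalityI) (use i assms in auto)
  then show ?thesis using i by blast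
qed

lemma rbbb_upper:
  assumes fk: "2^n < (fact k :: nat)"
  shows "EH_prop Q2_rbbb n (2*n + k)"
  unfolding EH_prop_def
proof (intro allI disjCI)
  fix col assume nomono: "\<not> has_mono_Qn n (2*n + k) col"
  let ?N = "2*n + k"
  define Y0 where "Y0 = {0..<n}"
  define Y where "Y = {n..<2*n}"
  define X where "X = {2*n..<2*n+k}"
  have "\<exists>R. R \<subseteq> Y0 \<and> col R = Red"
  proof (rule ccontr)
    assume nex: "\<not> (\<exists>R. R \<subseteq> Y0 \<and> col R = Red)"
    have allb: "col A = Blue" if "A \<subseteq> Y0" for A using that nex color_not_Blue by blast
    have "has_mono_Qn n ?N col"
      by (rule mono_from_emb[of Y0 n "\<lambda>A. A"]) (use allb in \<open>auto simp: Y0_def\<close>)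
    then show False using nomono by blast
  qed
  then obtain R where R: "R \<subseteq> Y0" "col R = Red" by blast
  define L where "L = {xs. distinct xs \<and> set xs = X}"
  define Xc where "Xc xs j = set (take j xs)" for xs :: "nat list" and j
  have st: "stair col R (Xc xs) Y k" if xsL: "xs \<in> L" for xs
  proof (rule ccontr)
    assume nst: "\<not> stair col R (Xc xs) Y k"
    have lx: "length xs = k" using xsL distinct_card[of xs] by (auto simp: L_def X_def)
    have Xm: "Xc xs i \<subseteq> Xc xs j" if "i \<le> j" "j \<le> k" for i j
      using set_take_subset_set_take[OF that(1)] by (simp add: Xc_def)
    have XcX: "Xc xs i \<subseteq> X" for i using xsL set_take_subset[of i xs] unfolding Xc_def L_def by blast
    have dX: "Xc xs i \<inter> Y = {}" if "i \<le> k" for i using XcX[of i] by (auto simp: X_def Y_def)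
    have dR: "R \<inter> Y = {}" using R by (auto simp: Y0_def Y_def)
    obtain g where g1: "\<And>A. A \<subseteq> Y \<Longrightarrow> (\<exists>i\<le>k. g A = R \<union> A \<union> Xc xs i)"
      and g2: "\<And>A B. A \<subseteq> Y \<Longrightarrow> B \<subseteq> Y \<Longrightarrow> (A \<subseteq> B \<longleftrightarrow> g A \<subseteq> g B)"
      and g3: "\<And>A. A \<subseteq> Y \<Longrightarrow> col (g A) = Red"
      using staircase_lemma[OF Xm dX dR nst] by blast
    have "has_mono_Qn n ?N col"
    proof (rule mono_from_emb[of Y n g])
      show "g A \<subseteq> {0..<?N}" if AY: "A \<subseteq> Y" for A
      proof -
        obtain i where "g A = R \<union> A \<union> Xc xs i" using g1[OF AY] by blast
        moreover have "R \<subseteq> {0..<?N}" "A \<subseteq> {0..<?N}" "Xc xs i \<subseteq> {0..<?N}"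
          using R AY XcX[of i] by (auto simp: Y0_def Y_def X_def)
        ultimately show ?thesis by simp
      qed
    qed (use g2 g3 in \<open>auto simp: Y_def\<close>)
    then show False using nomono by blast
  qed
  define Bf where "Bf xs = (SOME B. (\<forall>j\<le>k. B j \<subseteq> Y \<and> col (R \<union> B j \<union> Xc xs j) = Blue) \<and>
                                 (\<forall>i' j. i' \<le> j \<longrightarrow> j \<le> k \<longrightarrow> B i' \<subseteq> B j))" for xs
  have Bf: "(\<forall>j\<le>k. Bf xs j \<subseteq> Y \<and> col (R \<union> Bf xs j \<union> Xc xs j) = Blue) \<and>
            (\<forall>i' j. i' \<le> j \<longrightarrow> j \<le> k \<longrightarrow> Bf xs i' \<subseteq> Bf xs j)" if "xs \<in> L" for xs
  proof -
    have "\<exists>B. (\<forall>j\<le>k. B j \<subseteq> Y \<and> col (R \<union> B j \<union> Xc xs j) = Blue) \<and>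
               (\<forall>i' j. i' \<le> j \<longrightarrow> j \<le> k \<longrightarrow> B i' \<subseteq> B j)"
      using st[OF that] unfolding stair_def by blast
    then show ?thesis unfolding Bf_def by (rule someI_ex)
  qed
  define top where "top xs = Bf xs k" for xs
  have topY: "top ` L \<subseteq> Pow Y" using Bf by (auto simp: top_def)
  have "card L = fact k" using card_perms[of X] by (simp add: L_def X_def)
  moreover have "card (Pow Y) = 2^n" by (simp add: Y_def card_Pow)
  ultimately have "card (Pow Y) < card L" using fk by simp
  then have "\<not> inj_on top L" using card_inj_on_le[OF _ topY] by (auto simp: Y_def)
  then obtain xs ys where xy: "xs \<in> L" "ys \<in> L" "xs \<noteq> ys" "top xs = top ys"
    unfolding inj_on_def by blast
  have lxs: "length xs = k" and lys: "length ys = k"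
    using xy distinct_card[of xs] distinct_card[of ys] by (auto simp: L_def X_def)
  obtain i where i: "i < k" "take i xs = take i ys" "xs ! i \<noteq> ys ! i"
    using first_diff[OF xy(3)] lxs lys by auto
  have dxs: "distinct xs" "distinct ys" using xy by (auto simp: L_def)
  have tk1: "Xc xs (Suc i) = set (take i xs) \<union> {xs ! i}" using i lxs
    by (simp add: Xc_def take_Suc_conv_app_nth)
  have tk2: "Xc ys (Suc i) = set (take i ys) \<union> {ys ! i}" using i lys
    by (simp add: Xc_def take_Suc_conv_app_nth)
  have n1: "xs ! i \<notin> set (take i xs)" using dxs(1) i lxs
    by (intro nth_notin_take) auto
  have n2: "ys ! i \<notin> set (take i ys)" using dxs(2) i lys
    by (intro nth_notin_take) auto
  have inc1: "\<not> Xc xs (Suc i) \<subseteq> Xc ys (Suc i)" using tk1 tk2 n1 i by auto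
  have inc2: "\<not> Xc ys (Suc i) \<subseteq> Xc xs (Suc i)" using tk1 tk2 n2 i by auto
  have XcX: "Xc zs j \<subseteq> X" if "zs \<in> L" for zs j using that set_take_subset[of j zs] unfolding Xc_def L_def by blast
  have Xck: "Xc zs k = X" if "zs \<in> L" "length zs = k" for zs using that by (auto simp: Xc_def L_def)
  define b where "b = R \<union> Bf xs (Suc i) \<union> Xc xs (Suc i)"
  define c where "c = R \<union> Bf ys (Suc i) \<union> Xc ys (Suc i)"
  define d where "d = R \<union> top xs \<union> X"
  have BY: "Bf zs j \<subseteq> Y" if "zs \<in> L" "j \<le> k" for zs j using Bf[OF that(1)] that(2) by blast
  have RXY: "R \<inter> X = {}" "Y \<inter> X = {}" using R by (auto simp: Y0_def Y_def X_def)
  have bX: "b \<inter> X = Xc xs (Suc i)" using BY[OF xy(1), of "Suc i"] i XcX[OF xy(1)] RXY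
    by (auto simp: b_def)
  have cX: "c \<inter> X = Xc ys (Suc i)" using BY[OF xy(2), of "Suc i"] i XcX[OF xy(2)] RXY
    by (auto simp: c_def)
  have bc: "\<not> b \<subseteq> c" "\<not> c \<subseteq> b" using bX cX inc1 inc2 by blast+
  have ne1: "xs ! i \<in> Xc xs (Suc i)" "ys ! i \<in> Xc ys (Suc i)" using tk1 tk2 by auto
  have nR: "xs ! i \<notin> R" "ys ! i \<notin> R" using ne1 XcX xy RXY by blast+
  have Rb: "R \<subset> b" using ne1 nR by (auto simp: b_def)
  have Rc: "R \<subset> c" using ne1 nR by (auto simp: c_def)
  have bd: "b \<subseteq> d"
  proof -
    have "Bf xs (Suc i) \<subseteq> Bf xs k" using Bf[OF xy(1)] i by auto
    then show ?thesis using XcX[OF xy(1)] by (auto simp: b_def d_def top_def)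
  qed
  have cd: "c \<subseteq> d"
  proof -
    have "Bf ys (Suc i) \<subseteq> Bf ys k" using Bf[OF xy(2)] i by auto
    then show ?thesis using XcX[OF xy(2)] xy(4) by (auto simp: c_def d_def top_def)
  qed
  have dN: "d \<subseteq> {0..<?N}" using R BY[OF xy(1), of k] by (auto simp: d_def top_def Y0_def Y_def X_def)
  have cb: "col b = Blue" using Bf[OF xy(1)] i by (auto simp: b_def)
  have cc: "col c = Blue" using Bf[OF xy(2)] i by (auto simp: c_def)
  have cdd: "col d = Blue" using Bf[OF xy(1)] Xck[OF xy(1) lxs] by (auto simp: d_def top_def)
  show "has_colored_copy Q2_rbbb ?N col"
    by (rule copy4[OF Rb Rc bd cd bc dN]) (use R cb cc cdd in \<open>auto simp: Q2_rbbb_def\<close>)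
qed


lemma pow_le_fact: "m ^ j \<le> (fact (m + j) :: nat)"
proof (induction j)
  case 0 then show ?case by simp
next
  case (Suc j)
  have "m ^ Suc j = m * m ^ j" by simp
  also have "\<dots> \<le> Suc (m + j) * fact (m + j)" using Suc by (intro mult_mono) auto
  also have "\<dots> = fact (m + Suc j)" by simp
  finally show ?case .
qed

lemma ln_le_2sqrt:
  fixes x :: real
  assumes "1 \<le> x"
  shows "ln x \<le> 2 * sqrt x - 2"
proof -
  have "ln (sqrt x) \<le> sqrt x - 1" using assms by (intro ln_le_minus_one) simp
  then show ?thesis using ln_sqrt[of x] assms by simp
qed

lemma ln_le_half:
  fixes x :: real
  assumes "1 \<le> x"
  shows "ln x \<le> x / 2"
proof -
  have "0 \<le> (sqrt x - 2)^2" by simp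
  then have "0 \<le> x - 4 * sqrt x + 4" using assms by (simp add: power2_eq_square algebra_simps)
  then show ?thesis using ln_le_2sqrt[OF assms] by simp
qed

definition mK :: "nat \<Rightarrow> nat" where
  "mK n = nat \<lceil>2 * real n / ln (real n)\<rceil>"

lemma mK_bounds:
  assumes "n \<ge> 2"
  shows "2 * real n / ln (real n) \<le> real (mK n)" "real (mK n) \<le> 2 * real n / ln (real n) + 1"
proof -
  have "ln (real n) > 0" using assms by simp
  then have pos: "0 < 2 * real n / ln (real n)" using assms by simp
  show "2 * real n / ln (real n) \<le> real (mK n)" unfolding mK_def using pos by linarith
  show "real (mK n) \<le> 2 * real n / ln (real n) + 1" unfolding mK_def using pos by linarith
qed

lemma pow_lt_mK:
  assumes n2: "n \<ge> 2"
  shows "2 ^ n < mK n ^ mK n"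
proof -
  define x where "x = real n"
  define r where "r = 2 * x / ln x"
  define m where "m = real (mK n)"
  have x2: "x \<ge> 2" using n2 by (simp add: x_def)
  have lnpos: "ln x > 0" using x2 by simp
  have rm: "r \<le> m" using mK_bounds(1)[OF n2] by (simp add: r_def m_def x_def)
  have "ln x \<le> 2 * sqrt x" using ln_le_2sqrt[of x] x2 by simp
  then have "sqrt x * ln x \<le> sqrt x * (2 * sqrt x)" by (rule mult_left_mono) (use x2 in simp)
  also have "sqrt x * (2 * sqrt x) = 2 * x" using x2 by (simp add: algebra_simps)
  finally have "sqrt x * ln x \<le> 2 * x" .
  then have sr: "sqrt x \<le> r" unfolding r_def using lnpos by (simp add: pos_le_divide_eq)
  have sqpos: "sqrt x > 0" using x2 by simp
  have mpos: "m > 0" using sr rm sqpos by linarith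
  have lnm: "ln x / 2 \<le> ln m"
  proof -
    have "sqrt x \<le> m" using sr rm by linarith
    then have "ln (sqrt x) \<le> ln m" using sqpos by (intro ln_mono)
    then show ?thesis using ln_sqrt[of x] x2 by simp
  qed
  have "x = r * (ln x / 2)" unfolding r_def using lnpos by simp
  also have "\<dots> \<le> m * ln m"
  proof (rule mult_mono)
    show "0 \<le> m" using mpos by simp
    show "0 \<le> ln x / 2" using lnpos by simp
  qed (use rm lnm in auto)
  finally have xm: "x \<le> m * ln m" .
  have "ln 2 < (1::real)" using ln_2_less_1 by simp
  then have "x * ln 2 < x" using x2 by simp
  then have "ln (2 ^ n) < ln (m ^ mK n)"
    using xm mpos by (simp add: ln_realpow x_def m_def)
  then have "(2::real) ^ n < m ^ mK n" using mpos by (simp del: of_nat_power)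
  then show ?thesis unfolding m_def by (simp add: of_nat_power[symmetric] del: of_nat_power)
qed


lemma EH_le: "EH_prop pc n N \<Longrightarrow> EH_number pc n \<le> N"
  unfolding EH_number_def by (rule Least_le)

lemma EH_eq:
  assumes "EH_prop pc n (2*n)" and "\<And>N. N < 2*n \<Longrightarrow> \<not> EH_prop pc n N"
  shows "EH_number pc n = 2*n"
  unfolding EH_number_def
proof (rule Least_equality)
  show "EH_prop pc n (2*n)" by (rule assms(1))
  show "2*n \<le> y" if "EH_prop pc n y" for y using assms(2)[of y] that by (meson not_le)
qed

lemma EH_ge:
  assumes "\<exists>N. EH_prop pc n N" and "\<And>N. N < 2*n \<Longrightarrow> \<not> EH_prop pc n N"
  shows "2*n \<le> EH_number pc n"
proof -
  have "EH_prop pc n (EH_number pc n)" unfolding EH_number_def using assms(1) by (rule LeastI_ex)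
  then show ?thesis using assms(2) by (meson not_le)
qed

lemma QN2_mem: "{} \<in> QN 2" "{0} \<in> QN 2" "{0,1} \<in> QN 2" "{0, Suc 0} \<in> QN 2"
  by (auto simp: QN_def)

lemma low_brbb: "N < 2*n \<Longrightarrow> \<not> EH_prop Q2_brbb n N"
  by (rule lower_bound[of N n "{0}" "{0,1}"]) (auto simp: QN2_mem Q2_brbb_def)

lemma low_brrb: "N < 2*n \<Longrightarrow> \<not> EH_prop Q2_brrb n N"
  by (rule lower_bound[of N n "{0}" "{0,1}"]) (auto simp: QN2_mem Q2_brrb_def)

lemma low_rrbb: "N < 2*n \<Longrightarrow> \<not> EH_prop Q2_rrbb n N"
  by (rule lower_bound[of N n "{}" "{0,1}"]) (auto simp: QN2_mem Q2_rrbb_def)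

lemma low_rbbb: "N < 2*n \<Longrightarrow> \<not> EH_prop Q2_rbbb n N"
  by (rule lower_bound[of N n "{}" "{0,1}"]) (auto simp: QN2_mem Q2_rbbb_def)

lemma rbbb_exists: "\<exists>N. EH_prop Q2_rbbb n N"
proof -
  have "2^n < Suc (2^n)" by simp
  also have "\<dots> \<le> fact (Suc (2^n))" by (rule fact_ge_self)
  finally show ?thesis using rbbb_upper by blast
qed

lemma rbbb_bound:
  assumes "n \<ge> 2"
  shows "EH_number Q2_rbbb n \<le> 2*n + 2 * mK n"
proof -
  have "2 ^ n < mK n ^ mK n" by (rule pow_lt_mK[OF assms])
  also have "\<dots> \<le> fact (mK n + mK n)" by (rule pow_le_fact)
  finally have "2^n < (fact (2 * mK n) :: nat)" by (simp add: mult_2)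
  then have "EH_prop Q2_rbbb n (2*n + 2 * mK n)" by (rule rbbb_upper)
  then show ?thesis by (rule EH_le)
qed

lemma rbbb_asym:
  "(\<lambda>n::nat. real (EH_number Q2_rbbb n) - 2 * real n) \<in> O(\<lambda>n. real n / ln (real n))"
proof (rule bigoI[of _ 5])
  show "eventually (\<lambda>n. norm (real (EH_number Q2_rbbb n) - 2 * real n) \<le> 5 * norm (real n / ln (real n))) at_top"
    unfolding eventually_at_top_linorder
  proof (intro exI allI impI)
    fix n :: nat assume n2: "2 \<le> n"
    have lo: "2*n \<le> EH_number Q2_rbbb n" by (rule EH_ge[OF rbbb_exists low_rbbb])
    have up: "EH_number Q2_rbbb n \<le> 2*n + 2 * mK n" by (rule rbbb_bound[OF n2])
    have lnpos: "ln (real n) > 0" using n2 by simp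
    have q: "real n / ln (real n) \<ge> 2"
    proof -
      have "ln (real n) \<le> real n / 2" using ln_le_half[of "real n"] n2 by simp
      then show ?thesis using lnpos by (simp add: pos_le_divide_eq)
    qed
    have "norm (real (EH_number Q2_rbbb n) - 2 * real n) = real (EH_number Q2_rbbb n) - 2 * real n"
      using lo by simp
    also have "\<dots> \<le> 2 * real (mK n)" using up by linarith
    also have "\<dots> \<le> 2 * (2 * real n / ln (real n) + 1)" using mK_bounds(2)[OF n2] by simp
    also have "\<dots> = 4 * (real n / ln (real n)) + 2" by simp
    also have "\<dots> \<le> 5 * (real n / ln (real n))" using q by simp
    also have "\<dots> = 5 * norm (real n / ln (real n))" using lnpos by simp
    finally show "norm (real (EH_number Q2_rbbb n) - 2 * real n) \<le> 5 * norm (real n / ln (real n))" .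
  qed
qed

theorem theorem7:
  shows "(\<forall>n::nat. n \<ge> 1 \<longrightarrow>
            EH_number Q2_brbb n = 2 * n \<and>
            EH_number Q2_brrb n = 2 * n \<and>
            EH_number Q2_rrbb n = 2 * n \<and>
            (\<exists>N. EH_prop Q2_rbbb n N) \<and>
            2 * n \<le> EH_number Q2_rbbb n)
       \<and> (\<lambda>n::nat. real (EH_number Q2_rbbb n) - 2 * real n) \<in> O(\<lambda>n. real n / ln (real n))"
proof (intro conjI allI impI)
  fix n :: nat assume n1: "n \<ge> 1"
  show "EH_number Q2_brbb n = 2 * n" by (rule EH_eq[OF brbb_upper[OF n1] low_brbb])
  show "EH_number Q2_brrb n = 2 * n" by (rule EH_eq[OF brrb_upper[OF n1] low_brrb])
  show "EH_number Q2_rrbb n = 2 * n" by (rule EH_eq[OF rrbb_upper[OF n1] low_rrbb])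
  show "\<exists>N. EH_prop Q2_rbbb n N" by (rule rbbb_exists)
  show "2 * n \<le> EH_number Q2_rbbb n" by (rule EH_ge[OF rbbb_exists low_rbbb])
next
  show "(\<lambda>n::nat. real (EH_number Q2_rbbb n) - 2 * real n) \<in> O(\<lambda>n. real n / ln (real n))"
    by (rule rbbb_asym)
qed

end
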